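(* Let $\Gamma$ be the subgroup of $\Gamma^6$ generated by $A$ and $\mathrm{H}$. Then $\mathrm{H}$ is normal in $\Gamma$, and the quotient group $\Gamma/\mathrm{H}$ is cyclic of order $8$, generated by the coset $\mathrm{H}A$.
   Context: Let $\langle x,y\rangle=x_1y_1+\dots+x_6y_6-x_7y_7$ on $\mathbb{R}^7$, $H^6=\{x:\langle x,x\rangle=-1,x_7>0\}$, and $e_1,\dots,e_7$ the standard basis. $\Gamma^6=PO_{6,1}\mathbb{Z}$ is the group of $7\times7$ integer matrices preserving $\langle\cdot,\cdot\rangle$ and mapping $H^6$ to itself. $\mathrm{K}^6$ is the group of the $64$ matrices $\mathrm{diag}(\varepsilon_1,\dots,\varepsilon_6,1)$, $\varepsilon_i=\pm1$. Define vectors $u_1,\dots,u_{27}$: $u_i=-e_i$ for $1\le i\le 6$; $u_7,\dots,u_{21}$ are $e_a+e_b+e_7$ for the pairs $(a,b)=(1,2),(1,3),(2,3),(1,4),(2,4),(3,4),(1,5),(2,5),(3,5),(4,5),(1,6),(2,6),(3,6),(4,6),(5,6)$ in this order; $u_{22},\dots,u_{27}$ are $\sum_{i=1}^6e_i-e_c+2e_7$ for $c=6,5,4,3,2,1$ in this order. Let $R_j$ be the reflection $x\mapsto x-2\langle x,u_j\rangle u_j$. For $7\le j\le27$ let $k_j\in\mathrm{K}^6$ be the matrix with $\varepsilon_i=-1$ exactly for $i\in N_j$, where $N_7=\{2,3,5\}$, $N_8=\{1,2,3,4,5\}$, $N_9=\{3,4,5\}$, $N_{10}=\{1,2,3,5,6\}$,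 $N_{11}=\{1,4,6\}$, $N_{12}=\{2,3,5\}$, $N_{13}=\{3,4,5\}$, $N_{14}=\{1,2,5\}$, $N_{15}=\{5\}$, $N_{16}=\{2,4,6\}$, $N_{17}=\{1,2,5\}$, $N_{18}=\{2,4,6\}$, $N_{19}=\{6\}$, $N_{20}=\{1,3,4\}$, $N_{21}=\{1,2,3,5,6\}$, $N_{22}=\{1,3,4\}$, $N_{23}=\{2\}$, $N_{24}=\{1,4,6\}$, $N_{25}=\{1,2,3,4,5\}$, $N_{26}=\{4\}$, $N_{27}=\{3\}$. Let $\mathrm{H}$ be the subgroup of $\Gamma^6$ generated by all matrices $\ell R_j\ell k_j$ with $\ell\in\mathrm{K}^6$ and $7\le j\le 27$. Let $A=\begin{pmatrix}1&0&0&0&0&0&0\\0&1&0&0&1&0&-1\\0&0&0&0&0&1&0\\0&-1&0&-1&0&0&1\\0&0&1&0&0&0&0\\0&0&0&-1&-1&0&1\\0&-1&0&-1&-1&0&2\end{pmatrix}.$ *)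

theory Defs
  imports "Jordan_Normal_Form.Matrix" "HOL-Algebra.Coset" "HOL-Algebra.Generated_Groups"
begin

text \<open>Conventions: vectors in R^7 / Z^7 are JNF vectors of dimension 7 and the
 paper's coordinates x_1..x_7 are the (0-based) components x$0..x$6.
 Matrices are 7x7 JNF matrices acting on column vectors by mult_mat_vec.\<close>

definition lf :: "'a::comm_ring_1 vec \<Rightarrow> 'a vec \<Rightarrow> 'a" where
  "lf x y = (\<Sum>i<6. x $ i * y $ i) - x $ 6 * y $ 6"

definition hyp6 :: "real vec set" where
  "hyp6 = {x \<in> carrier_vec 7. lf x x = -1 \<and> x $ 6 > 0}"

definition Gamma6 :: "int mat set" where
  "Gamma6 = {M \<in> carrier_mat 7 7.
      (\<forall>x\<in>carrier_vec 7. \<forall>y\<in>carrier_vec 7.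
          lf (map_mat real_of_int M *\<^sub>v x) (map_mat real_of_int M *\<^sub>v y) = lf x y) \<and>
      (\<forall>x\<in>hyp6. map_mat real_of_int M *\<^sub>v x \<in> hyp6)}"

definition G6 :: "int mat monoid" where
  "G6 = \<lparr>carrier = Gamma6, mult = (*), one = 1\<^sub>m 7\<rparr>"

definition e :: "nat \<Rightarrow> int vec" where
  "e i = unit_vec 7 (i - 1)"

definition pairs :: "(nat \<times> nat) list" where
  "pairs = [(1,2),(1,3),(2,3),(1,4),(2,4),(3,4),(1,5),(2,5),(3,5),(4,5),
            (1,6),(2,6),(3,6),(4,6),(5,6)]"

definition cs :: "nat list" where
  "cs = [6,5,4,3,2,1]"

definition u :: "nat \<Rightarrow> int vec" where
  "u j = (if 1 \<le> j \<and> j \<le> 6 then - e j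
          else if 7 \<le> j \<and> j \<le> 21 then
            e (fst (pairs ! (j - 7))) + e (snd (pairs ! (j - 7))) + e 7
          else (vec 7 (\<lambda>i. if i < 6 then 1 else 0)) - e (cs ! (j - 22)) + 2 \<cdot>\<^sub>v e 7)"

definition refl_vec :: "int vec \<Rightarrow> int vec \<Rightarrow> int vec" where
  "refl_vec v x = x - (2 * lf x v) \<cdot>\<^sub>v v"

definition R :: "nat \<Rightarrow> int mat" where
  "R j = mat 7 7 (\<lambda>(i,k). refl_vec (u j) (e (k + 1)) $ i)"

definition kdiag :: "nat set \<Rightarrow> int mat" where
  "kdiag N = mat 7 7 (\<lambda>(i,k). if i = k then (if i < 6 \<and> i + 1 \<in> N then -1 else 1) else 0)"

definition K6 :: "int mat set" where
  "K6 = kdiag ` Pow {1..6}"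

definition Ns :: "nat set list" where
  "Ns = [{2,3,5},{1,2,3,4,5},{3,4,5},{1,2,3,5,6},{1,4,6},{2,3,5},{3,4,5},{1,2,5},
         {5},{2,4,6},{1,2,5},{2,4,6},{6},{1,3,4},{1,2,3,5,6},{1,3,4},{2},{1,4,6},
         {1,2,3,4,5},{4},{3}]"

definition k :: "nat \<Rightarrow> int mat" where
  "k j = kdiag (Ns ! (j - 7))"

definition Hgrp :: "int mat set" where
  "Hgrp = generate G6 {l * R j * l * k j | l j. l \<in> K6 \<and> 7 \<le> j \<and> j \<le> 27}"

definition A :: "int mat" where
  "A = mat_of_rows_list 7
     [[1,0,0,0,0,0,0],
      [0,1,0,0,1,0,-1],
      [0,0,0,0,0,1,0],
      [0,-1,0,-1,0,0,1],
      [0,0,1,0,0,0,0],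
      [0,0,0,-1,-1,0,1],
      [0,-1,0,-1,-1,0,2]]"

definition GammaA :: "int mat monoid" where
  "GammaA = G6\<lparr>carrier := generate G6 (insert A Hgrp)\<rparr>"

end

theory Submission
  imports Defs "Jordan_Normal_Form.Determinant"
begin

definition LM :: "int list list \<Rightarrow> int mat" where
  "LM X = mat 7 7 (\<lambda>(i,j). X!i!j)"

definition wf7 :: "int list list \<Rightarrow> bool" where
  "wf7 X \<longleftrightarrow> length X = 7 \<and> (\<forall>r\<in>set X. length r = 7)"

definition lmul :: "int list list \<Rightarrow> int list list \<Rightarrow> int list list" where
  "lmul X Y = map (\<lambda>r. map (\<lambda>c. sum_list (map2 (*) r c)) (List.transpose Y)) X"

lemma LM_carrier[simp]: "LM X \<in> carrier_mat 7 7" by (simp add: LM_def)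

lemma sum_list_map2_upt: "length r = n \<Longrightarrow> length c = n \<Longrightarrow>
   sum_list (map2 (*) r c) = (\<Sum>k<n. r!k * (c!k::int))"
proof (induction r arbitrary: c n)
  case Nil then show ?case by simp
next
  case (Cons a r)
  then obtain b c' where c: "c = b # c'" by (cases c) auto
  with Cons have "n = Suc (length r)" by simp
  then show ?case using Cons c by (simp del: sum.lessThan_Suc add: sum.lessThan_Suc_shift)
qed

lemma foldr_max_len: "(\<forall>r\<in>set Y. length r = n) \<Longrightarrow> Y \<noteq> [] \<Longrightarrow> foldr (\<lambda>xs. max (length xs)) Y 0 = n"
  by (induction Y) (auto, metis foldr.simps(1) id_apply list.set_cases max.idem max_0R)

lemma len_tr: "wf7 Y \<Longrightarrow> length (List.transpose Y) = 7"
  unfolding wf7_def length_transpose by (rule foldr_max_len) auto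

lemma wf7_lmul: "wf7 X \<Longrightarrow> wf7 Y \<Longrightarrow> wf7 (lmul X Y)"
  using len_tr[of Y] unfolding wf7_def lmul_def by auto

lemma LM_mult: assumes "wf7 X" "wf7 Y" shows "LM X * LM Y = LM (lmul X Y)"
proof (rule eq_matI)
  fix i j assume ij: "i < dim_row (LM (lmul X Y))" "j < dim_col (LM (lmul X Y))"
  hence ij': "i < 7" "j < 7" by (auto simp: LM_def)
  have lx: "length X = 7" and lr: "length (X!i) = 7" and ly: "length Y = 7"
    and lrY: "\<And>k. k < 7 \<Longrightarrow> length (Y!k) = 7"
    using assms ij' unfolding wf7_def by auto
  have tY: "List.transpose Y ! j = map (\<lambda>r. r!j) Y"
    using ij' lrY ly proof -
    have "filter (\<lambda>ys. j < length ys) Y = Y" using assms(2) ij' unfolding wf7_def by (auto intro!: filter_True)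
    then show ?thesis using ij' len_tr[OF assms(2)] by (subst List.nth_transpose) auto
  qed
  have "(LM X * LM Y) $$ (i,j) = (\<Sum>k<7. X!i!k * Y!k!j)"
    using ij' by (simp add: LM_def scalar_prod_def atLeast0LessThan)
  also have "\<dots> = sum_list (map2 (*) (X!i) (List.transpose Y ! j))"
    using lr ly tY by (subst sum_list_map2_upt[where n=7]) auto
  also have "\<dots> = LM (lmul X Y) $$ (i,j)"
    using ij' lx ly lrY len_tr[OF assms(2)] by (simp add: LM_def lmul_def)
  finally show "(LM X * LM Y) $$ (i,j) = LM (lmul X Y) $$ (i,j)" .
qed (auto simp: LM_def)

definition uL :: "nat \<Rightarrow> int list" where "uL j = [[-1,0,0,0,0,0,0], [0,-1,0,0,0,0,0], [0,0,-1,0,0,0,0], [0,0,0,-1,0,0,0], [0,0,0,0,-1,0,0], [0,0,0,0,0,-1,0], [1,1,0,0,0,0,1], [1,0,1,0,0,0,1], [0,1,1,0,0,0,1], [1,0,0,1,0,0,1], [0,1,0,1,0,0,1], [0,0,1,1,0,0,1], [1,0,0,0,1,0,1], [0,1,0,0,1,0,1], [0,0,1,0,1,0,1], [0,0,0,1,1,0,1], [1,0,0,0,0,1,1], [0,1,0,0,0,1,1], [0,0,1,0,0,1,1], [0,0,0,1,0,1,1], [0,0,0,0,1,1,1], [1,1,1,1,1,0,2], [1,1,1,1,0,1,2], [1,1,1,0,1,1,2], [1,1,0,1,1,1,2], [1,0,1,1,1,1,2], [0,1,1,1,1,1,2]] ! (j-1)"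

lemma u_all: "\<forall>j\<in>set [1..<28]. \<forall>i\<in>set [0..<7]. u j $ i = uL j ! i"
  by (simp add: u_def uL_def e_def pairs_def cs_def upt_rec)

definition J :: "int mat" where
  "J = mat 7 7 (\<lambda>(i,j). if i = j then (if i < 6 then 1 else -1) else 0)"

lemma J_carrier[simp]: "J \<in> carrier_mat 7 7" by (simp add: J_def)
lemma J_dims[simp]: "dim_row J = 7" "dim_col J = 7" by (simp_all add: J_def)

lemma sum7: "(\<Sum>i\<in>{0..<7}. f i) = (\<Sum>i<6. f i) + (f (6::nat) :: 'a::comm_monoid_add)"
  by (simp add: atLeast0LessThan lessThan_Suc[of 6, simplified] add.commute)

lemma Jv: fixes y :: "real vec" assumes "y \<in> carrier_vec 7" "i < 7"
  shows "(map_mat real_of_int J *\<^sub>v y) $ i = (if i < 6 then y $ i else - y $ i)"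
proof -
  have "(map_mat real_of_int J *\<^sub>v y) $ i = (\<Sum>k\<in>{0..<7}. real_of_int (if i = k then (if i < 6 then 1 else -1) else 0) * y $ k)"
    using assms by (simp add: J_def scalar_prod_def row_def)
  also have "\<dots> = (\<Sum>k\<in>{0..<7}. if k = i then (if i < 6 then 1 else -1) * y $ i else 0)"
    by (rule sum.cong) auto
  also have "\<dots> = (if i < 6 then y $ i else - y $ i)" using assms by (simp add: sum.delta)
  finally show ?thesis .
qed

lemma lf_J: fixes x y :: "real vec" assumes "x \<in> carrier_vec 7" "y \<in> carrier_vec 7"
  shows "lf x y = x \<bullet> (map_mat real_of_int J *\<^sub>v y)"
proof -
  have "x \<bullet> (map_mat real_of_int J *\<^sub>v y) = (\<Sum>i\<in>{0..<7}. x $ i * (if i < 6 then y $ i else - y $ i))"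
    unfolding scalar_prod_def using assms by (intro sum.cong) (auto simp: Jv[OF assms(2)] simp del: index_mult_mat_vec)
  also have "\<dots> = lf x y" unfolding sum7 lf_def by simp
  finally show ?thesis by simp
qed

lemma lf_M: fixes x y :: "real vec" and M :: "int mat"
  assumes M: "M \<in> carrier_mat 7 7" and x: "x \<in> carrier_vec 7" and y: "y \<in> carrier_vec 7"
  shows "lf (map_mat real_of_int M *\<^sub>v x) (map_mat real_of_int M *\<^sub>v y)
       = x \<bullet> (map_mat real_of_int (transpose_mat M * J * M) *\<^sub>v y)"
proof -
  let ?M = "map_mat real_of_int M" let ?J = "map_mat real_of_int J"
  have Mc: "?M \<in> carrier_mat 7 7" using M by simp
  have Jc: "?J \<in> carrier_mat 7 7" by simp
  have cv: "?J *\<^sub>v (?M *\<^sub>v y) \<in> carrier_vec 7" using Jc Mc y by (metis mult_mat_vec_carrier)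
  have "lf (?M *\<^sub>v x) (?M *\<^sub>v y) = (?M *\<^sub>v x) \<bullet> (?J *\<^sub>v (?M *\<^sub>v y))"
    using Mc x y by (intro lf_J) auto
  also have "\<dots> = (?J *\<^sub>v (?M *\<^sub>v y)) \<bullet> (?M *\<^sub>v x)"
    using Mc Jc x y by (metis comm_scalar_prod mult_mat_vec_carrier)
  also have "\<dots> = (transpose_mat ?M *\<^sub>v (?J *\<^sub>v (?M *\<^sub>v y))) \<bullet> x"
    using transpose_vec_mult_scalar[OF Mc x cv] by simp
  also have "transpose_mat ?M *\<^sub>v (?J *\<^sub>v (?M *\<^sub>v y)) = (transpose_mat ?M * ?J * ?M) *\<^sub>v y"
    using Mc Jc y by (simp add: assoc_mult_mat_vec[of _ 7 7 _ 7])
  also have "transpose_mat ?M * ?J * ?M = map_mat real_of_int (transpose_mat M * J * M)"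
    using M by (simp add: of_int_hom.mat_hom_mult[of _ 7 7 _ 7] map_mat_transpose)
  moreover have "map_mat real_of_int (transpose_mat M * J * M) *\<^sub>v y \<in> carrier_vec 7"
    using M y by (metis J_carrier map_carrier_mat mult_carrier_mat mult_mat_vec_carrier transpose_carrier_mat)
  ultimately show ?thesis using x by (metis comm_scalar_prod)
qed

lemma sq_expand: fixes a b :: "nat \<Rightarrow> real"
  shows "(\<Sum>i<6. (p * a i - q * b i)^2) = p^2 * (\<Sum>i<6. a i * a i) - 2 * p * q * (\<Sum>i<6. a i * b i) + q^2 * (\<Sum>i<6. b i * b i)"
  by (simp add: power2_diff sum.distrib sum_subtractf sum_distrib_left power_mult_distrib algebra_simps power2_eq_square)

lemma hyp_future: fixes a b :: "real vec"
  assumes aa: "lf a a = -1" and bb: "lf b b = -1" and a6: "a $ 6 > 0" and ab: "lf a b < 0"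
  shows "b $ 6 > 0"
proof (rule ccontr)
  assume "\<not> b $ 6 > 0" hence b6: "b $ 6 \<le> 0" by simp
  define Sa where "Sa = (\<Sum>i<6. a $ i * a $ i)"
  define Sb where "Sb = (\<Sum>i<6. b $ i * b $ i)"
  define Sab where "Sab = (\<Sum>i<6. a $ i * b $ i)"
  have Sa: "Sa = (a$6)^2 - 1" using aa unfolding lf_def Sa_def by (simp add: power2_eq_square)
  have Sb: "Sb = (b$6)^2 - 1" using bb unfolding lf_def Sb_def by (simp add: power2_eq_square)
  have Sab: "Sab < a$6 * b$6" using ab unfolding lf_def Sab_def by simp
  have Sbnn: "Sb \<ge> 0" unfolding Sb_def by (intro sum_nonneg) simp
  have "b $ 6 \<noteq> 0" using Sb Sbnn by auto
  hence b6': "b $ 6 < 0" using b6 by simp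
  have nn: "0 \<le> (\<Sum>i<6. (b$6 * a $ i - a$6 * b $ i)^2)" by (intro sum_nonneg) simp
  hence "2 * (b$6) * (a$6) * Sab \<le> (b$6)^2 * Sa + (a$6)^2 * Sb"
    unfolding sq_expand Sa_def Sb_def Sab_def by simp
  also have "\<dots> = 2 * (a$6)^2 * (b$6)^2 - (a$6)^2 - (b$6)^2" unfolding Sa Sb by (simp add: algebra_simps)
  finally have 1: "2 * (b$6) * (a$6) * Sab \<le> 2 * (a$6)^2 * (b$6)^2 - (a$6)^2 - (b$6)^2" .
  have "b$6 * a$6 < 0" using a6 b6' by (simp add: mult_neg_pos)
  hence "(b$6 * a$6) * Sab > (b$6 * a$6) * (a$6 * b$6)" using Sab by (simp add: mult_less_cancel_left_neg)
  hence "2 * (b$6) * (a$6) * Sab > 2 * (a$6)^2 * (b$6)^2" by (simp add: power2_eq_square algebra_simps)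
  with 1 have "(a$6)^2 + (b$6)^2 < 0" by simp
  thus False by (smt (verit) zero_le_power2)
qed

lemma G6I: assumes M: "M \<in> carrier_mat 7 7" and MJ: "transpose_mat M * J * M = J" and m66: "M $$ (6,6) > 0"
  shows "M \<in> Gamma6"
proof -
  let ?M = "map_mat real_of_int M"
  have pres: "lf (?M *\<^sub>v x) (?M *\<^sub>v y) = lf x y" if "x \<in> carrier_vec 7" "y \<in> carrier_vec 7" for x y
    using lf_M[OF M that] MJ lf_J[OF that] by simp
  have hyp: "?M *\<^sub>v x \<in> hyp6" if x: "x \<in> hyp6" for x
  proof -
    have xc: "x \<in> carrier_vec 7" and xx: "lf x x = -1" and x6: "x $ 6 > 0" using x by (auto simp: hyp6_def)
    let ?e = "unit_vec 7 6 :: real vec"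
    have ec: "?e \<in> carrier_vec 7" by simp
    have ee: "lf ?e ?e = -1" by (simp add: lf_def)
    have ex: "lf ?e x = - x $ 6" by (simp add: lf_def)
    have z6: "(?M *\<^sub>v ?e) $ 6 = real_of_int (M $$ (6,6))" using M by simp
    have yc: "?M *\<^sub>v x \<in> carrier_vec 7" using M xc by simp
    have "(?M *\<^sub>v x) $ 6 > 0"
    proof (rule hyp_future[of "?M *\<^sub>v ?e"])
      show "lf (?M *\<^sub>v ?e) (?M *\<^sub>v ?e) = -1" using pres[OF ec ec] ee by simp
      show "lf (?M *\<^sub>v x) (?M *\<^sub>v x) = -1" using pres[OF xc xc] xx by simp
      show "(?M *\<^sub>v ?e) $ 6 > 0" using z6 m66 by simp
      show "lf (?M *\<^sub>v ?e) (?M *\<^sub>v x) < 0" using pres[OF ec xc] ex x6 by simp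
    qed
    then show ?thesis using yc pres[OF xc xc] xx by (simp add: hyp6_def)
  qed
  show ?thesis unfolding Gamma6_def using M pres hyp by blast
qed

lemma unit_entry: fixes N :: "real mat" assumes "N \<in> carrier_mat 7 7" "b < 7" "c < 7"
  shows "unit_vec 7 b \<bullet> (N *\<^sub>v unit_vec 7 c) = N $$ (b,c)"
  using assms by simp

lemma G6D: assumes "M \<in> Gamma6"
  shows "M \<in> carrier_mat 7 7" "transpose_mat M * J * M = J" "M $$ (6,6) > 0"
proof -
  show M: "M \<in> carrier_mat 7 7" using assms by (simp add: Gamma6_def)
  have pres: "\<And>x y. x \<in> carrier_vec 7 \<Longrightarrow> y \<in> carrier_vec 7 \<Longrightarrow>
      lf (map_mat real_of_int M *\<^sub>v x) (map_mat real_of_int M *\<^sub>v y) = lf x y"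
    and hyp: "\<And>x. x \<in> hyp6 \<Longrightarrow> map_mat real_of_int M *\<^sub>v x \<in> hyp6"
    using assms by (auto simp: Gamma6_def)
  show "transpose_mat M * J * M = J"
  proof (rule eq_matI)
    fix b c assume "b < dim_row J" "c < dim_col J"
    hence bc: "b < 7" "c < 7" by auto
    let ?N = "map_mat real_of_int (transpose_mat M * J * M)"
    have Nc: "?N \<in> carrier_mat 7 7" using M by (metis J_carrier map_carrier_mat mult_carrier_mat transpose_carrier_mat)
    have Jc: "map_mat real_of_int J \<in> carrier_mat 7 7" by simp
    have "real_of_int ((transpose_mat M * J * M) $$ (b,c)) = ?N $$ (b,c)" using M bc by simp
    also have "\<dots> = unit_vec 7 b \<bullet> (?N *\<^sub>v unit_vec 7 c)" using unit_entry[OF Nc bc] by simp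
    also have "\<dots> = lf (unit_vec 7 b) (unit_vec 7 c)"
      using lf_M[OF M, of "unit_vec 7 b" "unit_vec 7 c"] pres[of "unit_vec 7 b" "unit_vec 7 c"] by simp
    also have "\<dots> = unit_vec 7 b \<bullet> (map_mat real_of_int J *\<^sub>v unit_vec 7 c)" by (simp add: lf_J)
    also have "\<dots> = real_of_int (J $$ (b,c))" using unit_entry[OF Jc bc] bc by simp
    finally show "(transpose_mat M * J * M) $$ (b,c) = J $$ (b,c)" by simp
  qed (use M in auto)
  let ?e = "unit_vec 7 6 :: real vec"
  have "?e \<in> hyp6" by (simp add: hyp6_def lf_def)
  hence "(map_mat real_of_int M *\<^sub>v ?e) $ 6 > 0" using hyp by (simp add: hyp6_def)
  thus "M $$ (6,6) > 0" using M by simp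
qed

lemmas mc7 = mult_carrier_mat[of _ 7 7 _ 7]
lemma JJ: "J * J = 1\<^sub>m 7"
proof (rule eq_matI)
  fix i j assume "i < dim_row (1\<^sub>m 7 :: int mat)" "j < dim_col (1\<^sub>m 7 :: int mat)"
  hence ij: "i < 7" "j < 7" by auto
  have "(J * J) $$ (i,j) = (\<Sum>k\<in>{0..<7}. (if i = k then (if i < 6 then 1 else -1) else 0) * (if k = j then (if k < 6 then 1 else -1) else 0))"
    using ij by (simp add: J_def scalar_prod_def)
  also have "\<dots> = (\<Sum>k\<in>{0..<7}. if k = i then (if i < 6 then 1 else -1) * (if i = j then (if i < 6 then 1 else -1) else 0) else 0)"
    by (rule sum.cong) auto
  also have "\<dots> = (1\<^sub>m 7 :: int mat) $$ (i,j)" using ij by (simp add: sum.delta)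
  finally show "(J * J) $$ (i,j) = 1\<^sub>m 7 $$ (i,j)" .
qed auto

lemma JT: "transpose_mat J = J" by (rule eq_matI) (auto simp: J_def)

lemma int_left_right_inverse: assumes X: "(X::int mat) \<in> carrier_mat 7 7" and Y: "Y \<in> carrier_mat 7 7"
  and XY: "X * Y = 1\<^sub>m 7" shows "Y * X = 1\<^sub>m 7"
proof -
  have "map_mat real_of_int X * map_mat real_of_int Y = 1\<^sub>m 7"
    using XY X Y by (metis of_int_hom.mat_hom_mult of_int_hom.mat_hom_one)
  hence "map_mat real_of_int Y * map_mat real_of_int X = 1\<^sub>m 7"
    by (rule mat_mult_left_right_inverse[rotated 2]) (use X Y in auto)
  hence "map_mat real_of_int (Y * X) = map_mat real_of_int (1\<^sub>m 7)"
    using X Y by (metis of_int_hom.mat_hom_mult of_int_hom.mat_hom_one)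
  thus ?thesis by (metis of_int_hom.vec_hom_inj of_int_hom.mat_hom_inj)
qed

lemma G6_inv: assumes "M \<in> Gamma6"
  shows "J * transpose_mat M * J \<in> Gamma6" "(J * transpose_mat M * J) * M = 1\<^sub>m 7"
    "M * (J * transpose_mat M * J) = 1\<^sub>m 7"
proof -
  note D = G6D[OF assms]
  have M: "M \<in> carrier_mat 7 7" by (rule D(1))
  have Mt: "transpose_mat M \<in> carrier_mat 7 7" using M by simp
  have Jc: "J \<in> carrier_mat 7 7" by simp
  define N where "N = J * transpose_mat M * J"
  have Nc: "N \<in> carrier_mat 7 7" unfolding N_def using M by (metis J_carrier mult_carrier_mat transpose_carrier_mat)
  have "N * M = J * (transpose_mat M * J * M)"
    unfolding N_def using M Mt Jc by (simp add: assoc_mult_mat[of _ 7 7 _ 7 _ 7] mc7)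
  also have "\<dots> = 1\<^sub>m 7" using D(2) JJ by simp
  finally have NM: "N * M = 1\<^sub>m 7" .
  have MN: "M * N = 1\<^sub>m 7" by (rule int_left_right_inverse[OF Nc M NM])
  have "M * J * transpose_mat M = M * N * J"
    unfolding N_def using M Mt Jc JJ by (simp add: assoc_mult_mat[of _ 7 7 _ 7 _ 7] mc7)
  hence MJM: "M * J * transpose_mat M = J" using MN M by simp
  have Nt: "transpose_mat N = J * M * J" unfolding N_def using M Mt Jc
    by (simp add: transpose_mult[of _ 7 7 _ 7] JT assoc_mult_mat[of _ 7 7 _ 7 _ 7] mc7)
  have JJ': "J * (J * X) = X" if "X \<in> carrier_mat 7 7" for X
    using that JJ by (simp add: assoc_mult_mat[of _ 7 7 _ 7 _ 7, symmetric])
  have "transpose_mat N * J * N = (J * M * J) * J * (J * transpose_mat M * J)" using Nt N_def by simp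
  also have "\<dots> = J * (M * J * transpose_mat M) * J"
    using M Mt Jc JJ by (simp add: assoc_mult_mat[of _ 7 7 _ 7 _ 7] mc7 JJ')
  also have "\<dots> = J" using MJM JJ Jc by (simp add: assoc_mult_mat[of _ 7 7 _ 7 _ 7] mc7)
  finally have NJN: "transpose_mat N * J * N = J" .
  have "N $$ (6,6) = M $$ (6,6)"
  proof -
    have "N $$ (6,6) = (\<Sum>k\<in>{0..<7}. (J * transpose_mat M) $$ (6,k) * J $$ (k,6))"
      unfolding N_def using M by (simp add: scalar_prod_def)
    also have "\<dots> = (\<Sum>k\<in>{0..<7::nat}. if k = 6 then (J * transpose_mat M) $$ (6,6) * -1 else 0)"
      by (rule sum.cong) (auto simp: J_def)
    also have "\<dots> = - (J * transpose_mat M) $$ (6,6)" by simp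
    also have "(J * transpose_mat M) $$ (6,6) = (\<Sum>k\<in>{0..<7}. J $$ (6,k) * M $$ (6,k))"
      using M by (simp add: scalar_prod_def)
    also have "\<dots> = (\<Sum>k\<in>{0..<7::nat}. if k = 6 then - M $$ (6,6) else 0)"
      by (rule sum.cong) (auto simp: J_def)
    finally show ?thesis by simp
  qed
  hence "N $$ (6,6) > 0" using D(3) by simp
  thus "J * transpose_mat M * J \<in> Gamma6" using G6I[OF Nc NJN] unfolding N_def by simp
  show "(J * transpose_mat M * J) * M = 1\<^sub>m 7" using NM N_def by simp
  show "M * (J * transpose_mat M * J) = 1\<^sub>m 7" using MN N_def by simp
qed

lemma G6_mult: assumes "M \<in> Gamma6" "N \<in> Gamma6" shows "M * N \<in> Gamma6"
proof -
  have M: "M \<in> carrier_mat 7 7" and N: "N \<in> carrier_mat 7 7" using assms by (auto simp: Gamma6_def)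
  have e: "map_mat real_of_int (M * N) *\<^sub>v x = map_mat real_of_int M *\<^sub>v (map_mat real_of_int N *\<^sub>v x)"
    if "x \<in> carrier_vec 7" for x
    using M N that by (simp add: of_int_hom.mat_hom_mult[OF M N] assoc_mult_mat_vec[of _ 7 7 _ 7])
  have cv: "map_mat real_of_int N *\<^sub>v x \<in> carrier_vec 7" if "x \<in> carrier_vec 7" for x
    using N that by simp
  show ?thesis using assms M N unfolding Gamma6_def
    by (simp add: e hyp6_def)
qed

lemma group_G6: "group G6"
proof (rule groupI)
  show "\<one>\<^bsub>G6\<^esub> \<in> carrier G6" unfolding G6_def
    by (simp, rule G6I) (auto)
qed (auto simp: G6_def G6_mult intro: assoc_mult_mat[of _ 7 7 _ 7 _ 7] dest: G6D G6_inv)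

definition RL :: "nat \<Rightarrow> int list list" where
  "RL j = map (\<lambda>i. map (\<lambda>k. (if i = k then 1 else 0) - 2 * (if k < 6 then uL j ! k else - (uL j ! 6)) * uL j ! i) [0..<7]) [0..<7]"

lemma wf7_RL: "wf7 (RL j)" by (simp add: wf7_def RL_def)

lemma sum_delta_mult: "(\<Sum>i<(n::nat). (if i = p then 1 else 0) * f i) = (if p < n then (f p :: int) else 0)"
  by (induction n) (auto simp: less_Suc_eq)

lemma dim_u: "dim_vec (u j) = 7" by (simp add: u_def e_def)

lemma R_RL: assumes j: "1 \<le> j" "j \<le> 27" shows "R j = LM (RL j)"
proof (rule eq_matI)
  fix i k assume "i < dim_row (LM (RL j))" "k < dim_col (LM (RL j))"
  hence ik: "i < 7" "k < 7" by (auto simp: LM_def)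
  have uu: "\<And>i. i < 7 \<Longrightarrow> u j $ i = uL j ! i" using u_all j ik by auto
  have lfe: "lf (unit_vec 7 k) (u j) = (if k < 6 then u j $ k else - u j $ 6)"
    using ik by (auto simp: lf_def sum_delta_mult)
  have "R j $$ (i,k) = (if i = k then 1 else 0) - 2 * (if k < 6 then u j $ k else - u j $ 6) * u j $ i"
    using ik by (simp add: R_def refl_vec_def lfe dim_u e_def)
  also have "\<dots> = LM (RL j) $$ (i,k)" using ik by (simp add: LM_def RL_def uu)
  finally show "R j $$ (i,k) = LM (RL j) $$ (i,k)" .
qed (auto simp: R_def LM_def)

lemma RL1: "RL 1 = [[-1,0,0,0,0,0,0], [0,1,0,0,0,0,0], [0,0,1,0,0,0,0], [0,0,0,1,0,0,0], [0,0,0,0,1,0,0], [0,0,0,0,0,1,0], [0,0,0,0,0,0,1]]" by (simp add: RL_def uL_def upt_rec)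
lemma RL2: "RL 2 = [[1,0,0,0,0,0,0], [0,-1,0,0,0,0,0], [0,0,1,0,0,0,0], [0,0,0,1,0,0,0], [0,0,0,0,1,0,0], [0,0,0,0,0,1,0], [0,0,0,0,0,0,1]]" by (simp add: RL_def uL_def upt_rec)
lemma RL3: "RL 3 = [[1,0,0,0,0,0,0], [0,1,0,0,0,0,0], [0,0,-1,0,0,0,0], [0,0,0,1,0,0,0], [0,0,0,0,1,0,0], [0,0,0,0,0,1,0], [0,0,0,0,0,0,1]]" by (simp add: RL_def uL_def upt_rec)
lemma RL4: "RL 4 = [[1,0,0,0,0,0,0], [0,1,0,0,0,0,0], [0,0,1,0,0,0,0], [0,0,0,-1,0,0,0], [0,0,0,0,1,0,0], [0,0,0,0,0,1,0], [0,0,0,0,0,0,1]]" by (simp add: RL_def uL_def upt_rec)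
lemma RL5: "RL 5 = [[1,0,0,0,0,0,0], [0,1,0,0,0,0,0], [0,0,1,0,0,0,0], [0,0,0,1,0,0,0], [0,0,0,0,-1,0,0], [0,0,0,0,0,1,0], [0,0,0,0,0,0,1]]" by (simp add: RL_def uL_def upt_rec)
lemma RL6: "RL 6 = [[1,0,0,0,0,0,0], [0,1,0,0,0,0,0], [0,0,1,0,0,0,0], [0,0,0,1,0,0,0], [0,0,0,0,1,0,0], [0,0,0,0,0,-1,0], [0,0,0,0,0,0,1]]" by (simp add: RL_def uL_def upt_rec)
lemma RL7: "RL 7 = [[-1,-2,0,0,0,0,2], [-2,-1,0,0,0,0,2], [0,0,1,0,0,0,0], [0,0,0,1,0,0,0], [0,0,0,0,1,0,0], [0,0,0,0,0,1,0], [-2,-2,0,0,0,0,3]]" by (simp add: RL_def uL_def upt_rec)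
lemma RL8: "RL 8 = [[-1,0,-2,0,0,0,2], [0,1,0,0,0,0,0], [-2,0,-1,0,0,0,2], [0,0,0,1,0,0,0], [0,0,0,0,1,0,0], [0,0,0,0,0,1,0], [-2,0,-2,0,0,0,3]]" by (simp add: RL_def uL_def upt_rec)
lemma RL9: "RL 9 = [[1,0,0,0,0,0,0], [0,-1,-2,0,0,0,2], [0,-2,-1,0,0,0,2], [0,0,0,1,0,0,0], [0,0,0,0,1,0,0], [0,0,0,0,0,1,0], [0,-2,-2,0,0,0,3]]" by (simp add: RL_def uL_def upt_rec)
lemma RL10: "RL 10 = [[-1,0,0,-2,0,0,2], [0,1,0,0,0,0,0], [0,0,1,0,0,0,0], [-2,0,0,-1,0,0,2], [0,0,0,0,1,0,0], [0,0,0,0,0,1,0], [-2,0,0,-2,0,0,3]]" by (simp add: RL_def uL_def upt_rec)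
lemma RL11: "RL 11 = [[1,0,0,0,0,0,0], [0,-1,0,-2,0,0,2], [0,0,1,0,0,0,0], [0,-2,0,-1,0,0,2], [0,0,0,0,1,0,0], [0,0,0,0,0,1,0], [0,-2,0,-2,0,0,3]]" by (simp add: RL_def uL_def upt_rec)
lemma RL12: "RL 12 = [[1,0,0,0,0,0,0], [0,1,0,0,0,0,0], [0,0,-1,-2,0,0,2], [0,0,-2,-1,0,0,2], [0,0,0,0,1,0,0], [0,0,0,0,0,1,0], [0,0,-2,-2,0,0,3]]" by (simp add: RL_def uL_def upt_rec)
lemma RL13: "RL 13 = [[-1,0,0,0,-2,0,2], [0,1,0,0,0,0,0], [0,0,1,0,0,0,0], [0,0,0,1,0,0,0], [-2,0,0,0,-1,0,2], [0,0,0,0,0,1,0], [-2,0,0,0,-2,0,3]]" by (simp add: RL_def uL_def upt_rec)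
lemma RL14: "RL 14 = [[1,0,0,0,0,0,0], [0,-1,0,0,-2,0,2], [0,0,1,0,0,0,0], [0,0,0,1,0,0,0], [0,-2,0,0,-1,0,2], [0,0,0,0,0,1,0], [0,-2,0,0,-2,0,3]]" by (simp add: RL_def uL_def upt_rec)
lemma RL15: "RL 15 = [[1,0,0,0,0,0,0], [0,1,0,0,0,0,0], [0,0,-1,0,-2,0,2], [0,0,0,1,0,0,0], [0,0,-2,0,-1,0,2], [0,0,0,0,0,1,0], [0,0,-2,0,-2,0,3]]" by (simp add: RL_def uL_def upt_rec)
lemma RL16: "RL 16 = [[1,0,0,0,0,0,0], [0,1,0,0,0,0,0], [0,0,1,0,0,0,0], [0,0,0,-1,-2,0,2], [0,0,0,-2,-1,0,2], [0,0,0,0,0,1,0], [0,0,0,-2,-2,0,3]]" by (simp add: RL_def uL_def upt_rec)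
lemma RL17: "RL 17 = [[-1,0,0,0,0,-2,2], [0,1,0,0,0,0,0], [0,0,1,0,0,0,0], [0,0,0,1,0,0,0], [0,0,0,0,1,0,0], [-2,0,0,0,0,-1,2], [-2,0,0,0,0,-2,3]]" by (simp add: RL_def uL_def upt_rec)
lemma RL18: "RL 18 = [[1,0,0,0,0,0,0], [0,-1,0,0,0,-2,2], [0,0,1,0,0,0,0], [0,0,0,1,0,0,0], [0,0,0,0,1,0,0], [0,-2,0,0,0,-1,2], [0,-2,0,0,0,-2,3]]" by (simp add: RL_def uL_def upt_rec)
lemma RL19: "RL 19 = [[1,0,0,0,0,0,0], [0,1,0,0,0,0,0], [0,0,-1,0,0,-2,2], [0,0,0,1,0,0,0], [0,0,0,0,1,0,0], [0,0,-2,0,0,-1,2], [0,0,-2,0,0,-2,3]]" by (simp add: RL_def uL_def upt_rec)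
lemma RL20: "RL 20 = [[1,0,0,0,0,0,0], [0,1,0,0,0,0,0], [0,0,1,0,0,0,0], [0,0,0,-1,0,-2,2], [0,0,0,0,1,0,0], [0,0,0,-2,0,-1,2], [0,0,0,-2,0,-2,3]]" by (simp add: RL_def uL_def upt_rec)
lemma RL21: "RL 21 = [[1,0,0,0,0,0,0], [0,1,0,0,0,0,0], [0,0,1,0,0,0,0], [0,0,0,1,0,0,0], [0,0,0,0,-1,-2,2], [0,0,0,0,-2,-1,2], [0,0,0,0,-2,-2,3]]" by (simp add: RL_def uL_def upt_rec)
lemma RL22: "RL 22 = [[-1,-2,-2,-2,-2,0,4], [-2,-1,-2,-2,-2,0,4], [-2,-2,-1,-2,-2,0,4], [-2,-2,-2,-1,-2,0,4], [-2,-2,-2,-2,-1,0,4], [0,0,0,0,0,1,0], [-4,-4,-4,-4,-4,0,9]]" by (simp add: RL_def uL_def upt_rec)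
lemma RL23: "RL 23 = [[-1,-2,-2,-2,0,-2,4], [-2,-1,-2,-2,0,-2,4], [-2,-2,-1,-2,0,-2,4], [-2,-2,-2,-1,0,-2,4], [0,0,0,0,1,0,0], [-2,-2,-2,-2,0,-1,4], [-4,-4,-4,-4,0,-4,9]]" by (simp add: RL_def uL_def upt_rec)
lemma RL24: "RL 24 = [[-1,-2,-2,0,-2,-2,4], [-2,-1,-2,0,-2,-2,4], [-2,-2,-1,0,-2,-2,4], [0,0,0,1,0,0,0], [-2,-2,-2,0,-1,-2,4], [-2,-2,-2,0,-2,-1,4], [-4,-4,-4,0,-4,-4,9]]" by (simp add: RL_def uL_def upt_rec)
lemma RL25: "RL 25 = [[-1,-2,0,-2,-2,-2,4], [-2,-1,0,-2,-2,-2,4], [0,0,1,0,0,0,0], [-2,-2,0,-1,-2,-2,4], [-2,-2,0,-2,-1,-2,4], [-2,-2,0,-2,-2,-1,4], [-4,-4,0,-4,-4,-4,9]]" by (simp add: RL_def uL_def upt_rec)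
lemma RL26: "RL 26 = [[-1,0,-2,-2,-2,-2,4], [0,1,0,0,0,0,0], [-2,0,-1,-2,-2,-2,4], [-2,0,-2,-1,-2,-2,4], [-2,0,-2,-2,-1,-2,4], [-2,0,-2,-2,-2,-1,4], [-4,0,-4,-4,-4,-4,9]]" by (simp add: RL_def uL_def upt_rec)
lemma RL27: "RL 27 = [[1,0,0,0,0,0,0], [0,-1,-2,-2,-2,-2,4], [0,-2,-1,-2,-2,-2,4], [0,-2,-2,-1,-2,-2,4], [0,-2,-2,-2,-1,-2,4], [0,-2,-2,-2,-2,-1,4], [0,-4,-4,-4,-4,-4,9]]" by (simp add: RL_def uL_def upt_rec)
lemmas RL_lits = RL1 RL2 RL3 RL4 RL5 RL6 RL7 RL8 RL9 RL10 RL11 RL12 RL13 RL14 RL15 RL16 RL17 RL18 RL19 RL20 RL21 RL22 RL23 RL24 RL25 RL26 RL27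

definition AL :: "int list list" where
  "AL = [[1,0,0,0,0,0,0], [0,1,0,0,1,0,-1], [0,0,0,0,0,1,0], [0,-1,0,-1,0,0,1], [0,0,1,0,0,0,0], [0,0,0,-1,-1,0,1], [0,-1,0,-1,-1,0,2]]"

lemma A_AL: "A = LM AL"
  by (rule eq_matI) (auto simp: A_def AL_def LM_def mat_of_rows_list_def)


definition sg :: "nat \<Rightarrow> nat" where
  "sg j = [1,11,5,20,18,3,17,25,21,7,4,14,10,2,16,6,23,19,27,9,12,13,24,26,8,22,15] ! (j - 1)"

lemma sg_range: "\<forall>j\<in>set [1..<28]. sg j \<in> set [1..<28]"
  by (simp add: sg_def upt_rec)

definition JL :: "int list list" where
  "JL = [[1,0,0,0,0,0,0],[0,1,0,0,0,0,0],[0,0,1,0,0,0,0],[0,0,0,1,0,0,0],[0,0,0,0,1,0,0],[0,0,0,0,0,1,0],[0,0,0,0,0,0,-1]]"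

lemma J_JL: "J = LM JL"
proof (rule eq_matI)
  fix i j assume "i < dim_row (LM JL)" "j < dim_col (LM JL)"
  hence "i \<in> set [0..<7]" "j \<in> set [0..<7]" by (auto simp: LM_def)
  thus "J $$ (i,j) = LM JL $$ (i,j)" by (simp add: upt_rec J_def LM_def JL_def) (auto)
qed (auto simp: LM_def)


lemma tr_nth: assumes "wf7 X" "i < 7" shows "List.transpose X ! i = map (\<lambda>xs. xs ! i) X"
proof -
  have f: "filter (\<lambda>ys. i < length ys) X = X" using assms unfolding wf7_def by (auto intro!: filter_True)
  have "i < length (List.transpose X)" using len_tr[OF assms(1)] assms(2) by simp
  from List.nth_transpose[OF this] f show ?thesis by simp
qed

lemma LM_transpose: assumes "wf7 X" shows "transpose_mat (LM X) = LM (List.transpose X)"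
proof (rule eq_matI)
  fix i j assume "i < dim_row (LM (List.transpose X))" "j < dim_col (LM (List.transpose X))"
  hence ij: "i < 7" "j < 7" by (auto simp: LM_def)
  have "length X = 7" using assms by (simp add: wf7_def)
  with tr_nth[OF assms ij(1)] show "transpose_mat (LM X) $$ (i,j) = LM (List.transpose X) $$ (i,j)"
    using ij by (simp add: LM_def)
qed (auto simp: LM_def)

lemma wf7_tr: assumes "wf7 X" shows "wf7 (List.transpose X)"
proof -
  have "length r = 7" if "r \<in> set (List.transpose X)" for r
  proof -
    have "\<exists>i<length (List.transpose X). r = List.transpose X ! i" using that by (simp only: in_set_conv_nth) auto
    then obtain i where i: "i < 7" "r = List.transpose X ! i" using len_tr[OF assms] by auto
    thus ?thesis using tr_nth[OF assms i(1)] assms by (simp add: wf7_def)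
  qed
  thus ?thesis using len_tr[OF assms] by (simp add: wf7_def)
qed

lemma wf7_JL: "wf7 JL" by (simp add: wf7_def JL_def)
lemma wf7_AL: "wf7 AL" by (simp add: wf7_def AL_def)

lemma G6_L: assumes "wf7 X" "lmul (lmul (List.transpose X) JL) X = JL" "X ! 6 ! 6 > 0"
  shows "LM X \<in> Gamma6"
proof (rule G6I)
  show "transpose_mat (LM X) * J * LM X = J"
    using assms by (simp add: LM_transpose J_JL LM_mult wf7_tr wf7_JL wf7_lmul)
  show "LM X $$ (6,6) > 0" using assms by (simp add: LM_def)
qed simp

lemma A_G6: "A \<in> Gamma6"
  unfolding A_AL by (rule G6_L) (simp_all add: wf7_AL, simp_all add: AL_def JL_def lmul_def)

lemma RG6_1: "R 1 \<in> Gamma6"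
proof -
  have "R 1 = LM (RL 1)" using R_RL[of 1] by simp
  also have "\<dots> \<in> Gamma6" unfolding RL1 by (rule G6_L) (simp_all add: wf7_def JL_def lmul_def)
  finally show ?thesis .
qed

lemma RG6_2: "R 2 \<in> Gamma6"
proof -
  have "R 2 = LM (RL 2)" using R_RL[of 2] by simp
  also have "\<dots> \<in> Gamma6" unfolding RL2 by (rule G6_L) (simp_all add: wf7_def JL_def lmul_def)
  finally show ?thesis .
qed

lemma RG6_3: "R 3 \<in> Gamma6"
proof -
  have "R 3 = LM (RL 3)" using R_RL[of 3] by simp
  also have "\<dots> \<in> Gamma6" unfolding RL3 by (rule G6_L) (simp_all add: wf7_def JL_def lmul_def)
  finally show ?thesis .
qed

lemma RG6_4: "R 4 \<in> Gamma6"
proof -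
  have "R 4 = LM (RL 4)" using R_RL[of 4] by simp
  also have "\<dots> \<in> Gamma6" unfolding RL4 by (rule G6_L) (simp_all add: wf7_def JL_def lmul_def)
  finally show ?thesis .
qed

lemma RG6_5: "R 5 \<in> Gamma6"
proof -
  have "R 5 = LM (RL 5)" using R_RL[of 5] by simp
  also have "\<dots> \<in> Gamma6" unfolding RL5 by (rule G6_L) (simp_all add: wf7_def JL_def lmul_def)
  finally show ?thesis .
qed

lemma RG6_6: "R 6 \<in> Gamma6"
proof -
  have "R 6 = LM (RL 6)" using R_RL[of 6] by simp
  also have "\<dots> \<in> Gamma6" unfolding RL6 by (rule G6_L) (simp_all add: wf7_def JL_def lmul_def)
  finally show ?thesis .
qed

lemma RG6_7: "R 7 \<in> Gamma6"
proof -
  have "R 7 = LM (RL 7)" using R_RL[of 7] by simp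
  also have "\<dots> \<in> Gamma6" unfolding RL7 by (rule G6_L) (simp_all add: wf7_def JL_def lmul_def)
  finally show ?thesis .
qed

lemma RG6_8: "R 8 \<in> Gamma6"
proof -
  have "R 8 = LM (RL 8)" using R_RL[of 8] by simp
  also have "\<dots> \<in> Gamma6" unfolding RL8 by (rule G6_L) (simp_all add: wf7_def JL_def lmul_def)
  finally show ?thesis .
qed

lemma RG6_9: "R 9 \<in> Gamma6"
proof -
  have "R 9 = LM (RL 9)" using R_RL[of 9] by simp
  also have "\<dots> \<in> Gamma6" unfolding RL9 by (rule G6_L) (simp_all add: wf7_def JL_def lmul_def)
  finally show ?thesis .
qed

lemma RG6_10: "R 10 \<in> Gamma6"
proof -
  have "R 10 = LM (RL 10)" using R_RL[of 10] by simp
  also have "\<dots> \<in> Gamma6" unfolding RL10 by (rule G6_L) (simp_all add: wf7_def JL_def lmul_def)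
  finally show ?thesis .
qed

lemma RG6_11: "R 11 \<in> Gamma6"
proof -
  have "R 11 = LM (RL 11)" using R_RL[of 11] by simp
  also have "\<dots> \<in> Gamma6" unfolding RL11 by (rule G6_L) (simp_all add: wf7_def JL_def lmul_def)
  finally show ?thesis .
qed

lemma RG6_12: "R 12 \<in> Gamma6"
proof -
  have "R 12 = LM (RL 12)" using R_RL[of 12] by simp
  also have "\<dots> \<in> Gamma6" unfolding RL12 by (rule G6_L) (simp_all add: wf7_def JL_def lmul_def)
  finally show ?thesis .
qed

lemma RG6_13: "R 13 \<in> Gamma6"
proof -
  have "R 13 = LM (RL 13)" using R_RL[of 13] by simp
  also have "\<dots> \<in> Gamma6" unfolding RL13 by (rule G6_L) (simp_all add: wf7_def JL_def lmul_def)
  finally show ?thesis .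
qed

lemma RG6_14: "R 14 \<in> Gamma6"
proof -
  have "R 14 = LM (RL 14)" using R_RL[of 14] by simp
  also have "\<dots> \<in> Gamma6" unfolding RL14 by (rule G6_L) (simp_all add: wf7_def JL_def lmul_def)
  finally show ?thesis .
qed

lemma RG6_15: "R 15 \<in> Gamma6"
proof -
  have "R 15 = LM (RL 15)" using R_RL[of 15] by simp
  also have "\<dots> \<in> Gamma6" unfolding RL15 by (rule G6_L) (simp_all add: wf7_def JL_def lmul_def)
  finally show ?thesis .
qed

lemma RG6_16: "R 16 \<in> Gamma6"
proof -
  have "R 16 = LM (RL 16)" using R_RL[of 16] by simp
  also have "\<dots> \<in> Gamma6" unfolding RL16 by (rule G6_L) (simp_all add: wf7_def JL_def lmul_def)
  finally show ?thesis .
qed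

lemma RG6_17: "R 17 \<in> Gamma6"
proof -
  have "R 17 = LM (RL 17)" using R_RL[of 17] by simp
  also have "\<dots> \<in> Gamma6" unfolding RL17 by (rule G6_L) (simp_all add: wf7_def JL_def lmul_def)
  finally show ?thesis .
qed

lemma RG6_18: "R 18 \<in> Gamma6"
proof -
  have "R 18 = LM (RL 18)" using R_RL[of 18] by simp
  also have "\<dots> \<in> Gamma6" unfolding RL18 by (rule G6_L) (simp_all add: wf7_def JL_def lmul_def)
  finally show ?thesis .
qed

lemma RG6_19: "R 19 \<in> Gamma6"
proof -
  have "R 19 = LM (RL 19)" using R_RL[of 19] by simp
  also have "\<dots> \<in> Gamma6" unfolding RL19 by (rule G6_L) (simp_all add: wf7_def JL_def lmul_def)
  finally show ?thesis .
qed

lemma RG6_20: "R 20 \<in> Gamma6"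
proof -
  have "R 20 = LM (RL 20)" using R_RL[of 20] by simp
  also have "\<dots> \<in> Gamma6" unfolding RL20 by (rule G6_L) (simp_all add: wf7_def JL_def lmul_def)
  finally show ?thesis .
qed

lemma RG6_21: "R 21 \<in> Gamma6"
proof -
  have "R 21 = LM (RL 21)" using R_RL[of 21] by simp
  also have "\<dots> \<in> Gamma6" unfolding RL21 by (rule G6_L) (simp_all add: wf7_def JL_def lmul_def)
  finally show ?thesis .
qed

lemma RG6_22: "R 22 \<in> Gamma6"
proof -
  have "R 22 = LM (RL 22)" using R_RL[of 22] by simp
  also have "\<dots> \<in> Gamma6" unfolding RL22 by (rule G6_L) (simp_all add: wf7_def JL_def lmul_def)
  finally show ?thesis .
qed

lemma RG6_23: "R 23 \<in> Gamma6"
proof -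
  have "R 23 = LM (RL 23)" using R_RL[of 23] by simp
  also have "\<dots> \<in> Gamma6" unfolding RL23 by (rule G6_L) (simp_all add: wf7_def JL_def lmul_def)
  finally show ?thesis .
qed

lemma RG6_24: "R 24 \<in> Gamma6"
proof -
  have "R 24 = LM (RL 24)" using R_RL[of 24] by simp
  also have "\<dots> \<in> Gamma6" unfolding RL24 by (rule G6_L) (simp_all add: wf7_def JL_def lmul_def)
  finally show ?thesis .
qed

lemma RG6_25: "R 25 \<in> Gamma6"
proof -
  have "R 25 = LM (RL 25)" using R_RL[of 25] by simp
  also have "\<dots> \<in> Gamma6" unfolding RL25 by (rule G6_L) (simp_all add: wf7_def JL_def lmul_def)
  finally show ?thesis .
qed

lemma RG6_26: "R 26 \<in> Gamma6"
proof -
  have "R 26 = LM (RL 26)" using R_RL[of 26] by simp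
  also have "\<dots> \<in> Gamma6" unfolding RL26 by (rule G6_L) (simp_all add: wf7_def JL_def lmul_def)
  finally show ?thesis .
qed

lemma RG6_27: "R 27 \<in> Gamma6"
proof -
  have "R 27 = LM (RL 27)" using R_RL[of 27] by simp
  also have "\<dots> \<in> Gamma6" unfolding RL27 by (rule G6_L) (simp_all add: wf7_def JL_def lmul_def)
  finally show ?thesis .
qed

lemmas RG6s = RG6_1 RG6_2 RG6_3 RG6_4 RG6_5 RG6_6 RG6_7 RG6_8 RG6_9 RG6_10 RG6_11 RG6_12 RG6_13 RG6_14 RG6_15 RG6_16 RG6_17 RG6_18 RG6_19 RG6_20 RG6_21 RG6_22 RG6_23 RG6_24 RG6_25 RG6_26 RG6_27
lemma conjA_1: "A * R 1 = R 2 * R 1 * R 2 * A"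
proof -
  have "lmul AL (RL 1) = lmul (lmul (lmul (RL 2) (RL 1)) (RL 2)) AL"
    unfolding RL1 RL1 RL2 by (simp add: AL_def lmul_def)
  thus ?thesis using R_RL[of 1] R_RL[of 1] R_RL[of 2] by (simp add: A_AL LM_mult wf7_AL wf7_RL wf7_lmul)
qed

lemma conjA_2: "A * R 2 = R 2 * R 11 * R 2 * A"
proof -
  have "lmul AL (RL 2) = lmul (lmul (lmul (RL 2) (RL 11)) (RL 2)) AL"
    unfolding RL2 RL11 RL2 by (simp add: AL_def lmul_def)
  thus ?thesis using R_RL[of 2] R_RL[of 11] R_RL[of 2] by (simp add: A_AL LM_mult wf7_AL wf7_RL wf7_lmul)
qed

lemma conjA_3: "A * R 3 = R 2 * R 5 * R 2 * A"
proof -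
  have "lmul AL (RL 3) = lmul (lmul (lmul (RL 2) (RL 5)) (RL 2)) AL"
    unfolding RL3 RL5 RL2 by (simp add: AL_def lmul_def)
  thus ?thesis using R_RL[of 3] R_RL[of 5] R_RL[of 2] by (simp add: A_AL LM_mult wf7_AL wf7_RL wf7_lmul)
qed

lemma conjA_4: "A * R 4 = R 2 * R 20 * R 2 * A"
proof -
  have "lmul AL (RL 4) = lmul (lmul (lmul (RL 2) (RL 20)) (RL 2)) AL"
    unfolding RL4 RL20 RL2 by (simp add: AL_def lmul_def)
  thus ?thesis using R_RL[of 4] R_RL[of 20] R_RL[of 2] by (simp add: A_AL LM_mult wf7_AL wf7_RL wf7_lmul)
qed

lemma conjA_5: "A * R 5 = R 2 * R 18 * R 2 * A"
proof -
  have "lmul AL (RL 5) = lmul (lmul (lmul (RL 2) (RL 18)) (RL 2)) AL"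
    unfolding RL5 RL18 RL2 by (simp add: AL_def lmul_def)
  thus ?thesis using R_RL[of 5] R_RL[of 18] R_RL[of 2] by (simp add: A_AL LM_mult wf7_AL wf7_RL wf7_lmul)
qed

lemma conjA_6: "A * R 6 = R 2 * R 3 * R 2 * A"
proof -
  have "lmul AL (RL 6) = lmul (lmul (lmul (RL 2) (RL 3)) (RL 2)) AL"
    unfolding RL6 RL3 RL2 by (simp add: AL_def lmul_def)
  thus ?thesis using R_RL[of 6] R_RL[of 3] R_RL[of 2] by (simp add: A_AL LM_mult wf7_AL wf7_RL wf7_lmul)
qed

lemma conjA_7: "A * R 7 = R 2 * R 17 * R 2 * A"
proof -
  have "lmul AL (RL 7) = lmul (lmul (lmul (RL 2) (RL 17)) (RL 2)) AL"
    unfolding RL7 RL17 RL2 by (simp add: AL_def lmul_def)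
  thus ?thesis using R_RL[of 7] R_RL[of 17] R_RL[of 2] by (simp add: A_AL LM_mult wf7_AL wf7_RL wf7_lmul)
qed

lemma conjA_8: "A * R 8 = R 2 * R 25 * R 2 * A"
proof -
  have "lmul AL (RL 8) = lmul (lmul (lmul (RL 2) (RL 25)) (RL 2)) AL"
    unfolding RL8 RL25 RL2 by (simp add: AL_def lmul_def)
  thus ?thesis using R_RL[of 8] R_RL[of 25] R_RL[of 2] by (simp add: A_AL LM_mult wf7_AL wf7_RL wf7_lmul)
qed

lemma conjA_9: "A * R 9 = R 2 * R 21 * R 2 * A"
proof -
  have "lmul AL (RL 9) = lmul (lmul (lmul (RL 2) (RL 21)) (RL 2)) AL"
    unfolding RL9 RL21 RL2 by (simp add: AL_def lmul_def)
  thus ?thesis using R_RL[of 9] R_RL[of 21] R_RL[of 2] by (simp add: A_AL LM_mult wf7_AL wf7_RL wf7_lmul)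
qed

lemma conjA_10: "A * R 10 = R 2 * R 7 * R 2 * A"
proof -
  have "lmul AL (RL 10) = lmul (lmul (lmul (RL 2) (RL 7)) (RL 2)) AL"
    unfolding RL10 RL7 RL2 by (simp add: AL_def lmul_def)
  thus ?thesis using R_RL[of 10] R_RL[of 7] R_RL[of 2] by (simp add: A_AL LM_mult wf7_AL wf7_RL wf7_lmul)
qed

lemma conjA_11: "A * R 11 = R 2 * R 4 * R 2 * A"
proof -
  have "lmul AL (RL 11) = lmul (lmul (lmul (RL 2) (RL 4)) (RL 2)) AL"
    unfolding RL11 RL4 RL2 by (simp add: AL_def lmul_def)
  thus ?thesis using R_RL[of 11] R_RL[of 4] R_RL[of 2] by (simp add: A_AL LM_mult wf7_AL wf7_RL wf7_lmul)
qed

lemma conjA_12: "A * R 12 = R 2 * R 14 * R 2 * A"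
proof -
  have "lmul AL (RL 12) = lmul (lmul (lmul (RL 2) (RL 14)) (RL 2)) AL"
    unfolding RL12 RL14 RL2 by (simp add: AL_def lmul_def)
  thus ?thesis using R_RL[of 12] R_RL[of 14] R_RL[of 2] by (simp add: A_AL LM_mult wf7_AL wf7_RL wf7_lmul)
qed

lemma conjA_13: "A * R 13 = R 2 * R 10 * R 2 * A"
proof -
  have "lmul AL (RL 13) = lmul (lmul (lmul (RL 2) (RL 10)) (RL 2)) AL"
    unfolding RL13 RL10 RL2 by (simp add: AL_def lmul_def)
  thus ?thesis using R_RL[of 13] R_RL[of 10] R_RL[of 2] by (simp add: A_AL LM_mult wf7_AL wf7_RL wf7_lmul)
qed

lemma conjA_14: "A * R 14 = R 2 * R 2 * R 2 * A"
proof -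
  have "lmul AL (RL 14) = lmul (lmul (lmul (RL 2) (RL 2)) (RL 2)) AL"
    unfolding RL14 RL2 by (simp add: AL_def lmul_def)
  thus ?thesis using R_RL[of 14] R_RL[of 2] by (simp add: A_AL LM_mult wf7_AL wf7_RL wf7_lmul)
qed

lemma conjA_15: "A * R 15 = R 2 * R 16 * R 2 * A"
proof -
  have "lmul AL (RL 15) = lmul (lmul (lmul (RL 2) (RL 16)) (RL 2)) AL"
    unfolding RL15 RL16 RL2 by (simp add: AL_def lmul_def)
  thus ?thesis using R_RL[of 15] R_RL[of 16] R_RL[of 2] by (simp add: A_AL LM_mult wf7_AL wf7_RL wf7_lmul)
qed

lemma conjA_16: "A * R 16 = R 2 * R 6 * R 2 * A"
proof -
  have "lmul AL (RL 16) = lmul (lmul (lmul (RL 2) (RL 6)) (RL 2)) AL"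
    unfolding RL16 RL6 RL2 by (simp add: AL_def lmul_def)
  thus ?thesis using R_RL[of 16] R_RL[of 6] R_RL[of 2] by (simp add: A_AL LM_mult wf7_AL wf7_RL wf7_lmul)
qed

lemma conjA_17: "A * R 17 = R 2 * R 23 * R 2 * A"
proof -
  have "lmul AL (RL 17) = lmul (lmul (lmul (RL 2) (RL 23)) (RL 2)) AL"
    unfolding RL17 RL23 RL2 by (simp add: AL_def lmul_def)
  thus ?thesis using R_RL[of 17] R_RL[of 23] R_RL[of 2] by (simp add: A_AL LM_mult wf7_AL wf7_RL wf7_lmul)
qed

lemma conjA_18: "A * R 18 = R 2 * R 19 * R 2 * A"
proof -
  have "lmul AL (RL 18) = lmul (lmul (lmul (RL 2) (RL 19)) (RL 2)) AL"
    unfolding RL18 RL19 RL2 by (simp add: AL_def lmul_def)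
  thus ?thesis using R_RL[of 18] R_RL[of 19] R_RL[of 2] by (simp add: A_AL LM_mult wf7_AL wf7_RL wf7_lmul)
qed

lemma conjA_19: "A * R 19 = R 2 * R 27 * R 2 * A"
proof -
  have "lmul AL (RL 19) = lmul (lmul (lmul (RL 2) (RL 27)) (RL 2)) AL"
    unfolding RL19 RL27 RL2 by (simp add: AL_def lmul_def)
  thus ?thesis using R_RL[of 19] R_RL[of 27] R_RL[of 2] by (simp add: A_AL LM_mult wf7_AL wf7_RL wf7_lmul)
qed

lemma conjA_20: "A * R 20 = R 2 * R 9 * R 2 * A"
proof -
  have "lmul AL (RL 20) = lmul (lmul (lmul (RL 2) (RL 9)) (RL 2)) AL"
    unfolding RL20 RL9 RL2 by (simp add: AL_def lmul_def)
  thus ?thesis using R_RL[of 20] R_RL[of 9] R_RL[of 2] by (simp add: A_AL LM_mult wf7_AL wf7_RL wf7_lmul)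
qed

lemma conjA_21: "A * R 21 = R 2 * R 12 * R 2 * A"
proof -
  have "lmul AL (RL 21) = lmul (lmul (lmul (RL 2) (RL 12)) (RL 2)) AL"
    unfolding RL21 RL12 RL2 by (simp add: AL_def lmul_def)
  thus ?thesis using R_RL[of 21] R_RL[of 12] R_RL[of 2] by (simp add: A_AL LM_mult wf7_AL wf7_RL wf7_lmul)
qed

lemma conjA_22: "A * R 22 = R 2 * R 13 * R 2 * A"
proof -
  have "lmul AL (RL 22) = lmul (lmul (lmul (RL 2) (RL 13)) (RL 2)) AL"
    unfolding RL22 RL13 RL2 by (simp add: AL_def lmul_def)
  thus ?thesis using R_RL[of 22] R_RL[of 13] R_RL[of 2] by (simp add: A_AL LM_mult wf7_AL wf7_RL wf7_lmul)
qed

lemma conjA_23: "A * R 23 = R 2 * R 24 * R 2 * A"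
proof -
  have "lmul AL (RL 23) = lmul (lmul (lmul (RL 2) (RL 24)) (RL 2)) AL"
    unfolding RL23 RL24 RL2 by (simp add: AL_def lmul_def)
  thus ?thesis using R_RL[of 23] R_RL[of 24] R_RL[of 2] by (simp add: A_AL LM_mult wf7_AL wf7_RL wf7_lmul)
qed

lemma conjA_24: "A * R 24 = R 2 * R 26 * R 2 * A"
proof -
  have "lmul AL (RL 24) = lmul (lmul (lmul (RL 2) (RL 26)) (RL 2)) AL"
    unfolding RL24 RL26 RL2 by (simp add: AL_def lmul_def)
  thus ?thesis using R_RL[of 24] R_RL[of 26] R_RL[of 2] by (simp add: A_AL LM_mult wf7_AL wf7_RL wf7_lmul)
qed

lemma conjA_25: "A * R 25 = R 2 * R 8 * R 2 * A"
proof -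
  have "lmul AL (RL 25) = lmul (lmul (lmul (RL 2) (RL 8)) (RL 2)) AL"
    unfolding RL25 RL8 RL2 by (simp add: AL_def lmul_def)
  thus ?thesis using R_RL[of 25] R_RL[of 8] R_RL[of 2] by (simp add: A_AL LM_mult wf7_AL wf7_RL wf7_lmul)
qed

lemma conjA_26: "A * R 26 = R 2 * R 22 * R 2 * A"
proof -
  have "lmul AL (RL 26) = lmul (lmul (lmul (RL 2) (RL 22)) (RL 2)) AL"
    unfolding RL26 RL22 RL2 by (simp add: AL_def lmul_def)
  thus ?thesis using R_RL[of 26] R_RL[of 22] R_RL[of 2] by (simp add: A_AL LM_mult wf7_AL wf7_RL wf7_lmul)
qed

lemma conjA_27: "A * R 27 = R 2 * R 15 * R 2 * A"
proof -
  have "lmul AL (RL 27) = lmul (lmul (lmul (RL 2) (RL 15)) (RL 2)) AL"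
    unfolding RL27 RL15 RL2 by (simp add: AL_def lmul_def)
  thus ?thesis using R_RL[of 27] R_RL[of 15] R_RL[of 2] by (simp add: A_AL LM_mult wf7_AL wf7_RL wf7_lmul)
qed

lemmas conjAs = conjA_1 conjA_2 conjA_3 conjA_4 conjA_5 conjA_6 conjA_7 conjA_8 conjA_9 conjA_10 conjA_11 conjA_12 conjA_13 conjA_14 conjA_15 conjA_16 conjA_17 conjA_18 conjA_19 conjA_20 conjA_21 conjA_22 conjA_23 conjA_24 conjA_25 conjA_26 conjA_27

lemma in27: "1 \<le> j \<Longrightarrow> j \<le> (27::nat) \<Longrightarrow> j = 1 \<or> j = 2 \<or> j = 3 \<or> j = 4 \<or> j = 5 \<or> j = 6 \<or> j = 7 \<or> j = 8 \<or> j = 9 \<or> j = 10 \<or> j = 11 \<or> j = 12 \<or> j = 13 \<or> j = 14 \<or> j = 15 \<or> j = 16 \<or> j = 17 \<or> j = 18 \<or> j = 19 \<or> j = 20 \<or> j = 21 \<or> j = 22 \<or> j = 23 \<or> j = 24 \<or> j = 25 \<or> j = 26 \<or> j = 27" by presburger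

lemma R_G6: "1 \<le> j \<Longrightarrow> j \<le> 27 \<Longrightarrow> R j \<in> Gamma6"
  by (drule (1) in27) (elim disjE, simp_all only: RG6s)

lemma sg1: "sg 1 = 1" by (simp add: sg_def)
lemma sg2: "sg 2 = 11" by (simp add: sg_def)
lemma sg3: "sg 3 = 5" by (simp add: sg_def)
lemma sg4: "sg 4 = 20" by (simp add: sg_def)
lemma sg5: "sg 5 = 18" by (simp add: sg_def)
lemma sg6: "sg 6 = 3" by (simp add: sg_def)
lemma sg7: "sg 7 = 17" by (simp add: sg_def)
lemma sg8: "sg 8 = 25" by (simp add: sg_def)
lemma sg9: "sg 9 = 21" by (simp add: sg_def)
lemma sg10: "sg 10 = 7" by (simp add: sg_def)
lemma sg11: "sg 11 = 4" by (simp add: sg_def)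
lemma sg12: "sg 12 = 14" by (simp add: sg_def)
lemma sg13: "sg 13 = 10" by (simp add: sg_def)
lemma sg14: "sg 14 = 2" by (simp add: sg_def)
lemma sg15: "sg 15 = 16" by (simp add: sg_def)
lemma sg16: "sg 16 = 6" by (simp add: sg_def)
lemma sg17: "sg 17 = 23" by (simp add: sg_def)
lemma sg18: "sg 18 = 19" by (simp add: sg_def)
lemma sg19: "sg 19 = 27" by (simp add: sg_def)
lemma sg20: "sg 20 = 9" by (simp add: sg_def)
lemma sg21: "sg 21 = 12" by (simp add: sg_def)
lemma sg22: "sg 22 = 13" by (simp add: sg_def)
lemma sg23: "sg 23 = 24" by (simp add: sg_def)
lemma sg24: "sg 24 = 26" by (simp add: sg_def)
lemma sg25: "sg 25 = 8" by (simp add: sg_def)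
lemma sg26: "sg 26 = 22" by (simp add: sg_def)
lemma sg27: "sg 27 = 15" by (simp add: sg_def)
lemmas sg_vals = sg1 sg2 sg3 sg4 sg5 sg6 sg7 sg8 sg9 sg10 sg11 sg12 sg13 sg14 sg15 sg16 sg17 sg18 sg19 sg20 sg21 sg22 sg23 sg24 sg25 sg26 sg27

lemma conjA: "1 \<le> j \<Longrightarrow> j \<le> 27 \<Longrightarrow> A * R j = R 2 * R (sg j) * R 2 * A"
  by (drule (1) in27) (elim disjE, simp_all only: conjAs sg_vals)

definition sd :: "nat set \<Rightarrow> nat set \<Rightarrow> nat set" where "sd X Y = (X - Y) \<union> (Y - X)"

lemma sd_simps[simp]: "sd X X = {}" "sd {} X = X" "sd X {} = X" "sd X (sd X Y) = Y" "sd Y (sd X Y) = X"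
  "sd (sd X Y) (sd X Z) = sd Y Z"
  by (auto simp: sd_def)
lemma sd_assoc: "sd (sd X Y) Z = sd X (sd Y Z)" by (auto simp: sd_def)
lemma sd_comm: "sd X Y = sd Y X" by (auto simp: sd_def)

lemma kdiag_carrier[simp]: "kdiag N \<in> carrier_mat 7 7" by (simp add: kdiag_def)

lemma kdiag_mult: "kdiag X * kdiag Y = kdiag (sd X Y)"
proof (rule eq_matI)
  fix i j assume "i < dim_row (kdiag (sd X Y))" "j < dim_col (kdiag (sd X Y))"
  hence ij: "i < 7" "j < 7" by (auto simp: kdiag_def)
  let ?s = "\<lambda>N i. if i < 6 \<and> i + 1 \<in> N then -1 else (1::int)"
  have "(kdiag X * kdiag Y) $$ (i,j) = (\<Sum>k\<in>{0..<7}. (if i = k then ?s X i else 0) * (if k = j then ?s Y k else 0))"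
    using ij by (simp add: kdiag_def scalar_prod_def)
  also have "\<dots> = (\<Sum>k\<in>{0..<7}. if k = i then (if i = j then ?s X i * ?s Y i else 0) else 0)"
    by (rule sum.cong) auto
  also have "\<dots> = (if i = j then ?s X i * ?s Y i else 0)" using ij by simp
  also have "\<dots> = kdiag (sd X Y) $$ (i,j)" using ij by (auto simp: kdiag_def sd_def)
  finally show "(kdiag X * kdiag Y) $$ (i,j) = kdiag (sd X Y) $$ (i,j)" .
qed (auto simp: kdiag_def)

lemma kdiag_mult2: "Z \<in> carrier_mat 7 7 \<Longrightarrow> kdiag X * (kdiag Y * Z) = kdiag (sd X Y) * Z"
  by (simp add: assoc_mult_mat[of _ 7 7 _ 7 _ 7, symmetric] kdiag_mult)

lemma kdiag_empty: "kdiag {} = 1\<^sub>m 7" by (rule eq_matI) (auto simp: kdiag_def)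

definition KL :: "nat set \<Rightarrow> int list list" where
  "KL N = map (\<lambda>i. map (\<lambda>j. if i = j then (if i < 6 \<and> i + 1 \<in> N then -1 else 1) else 0) [0..<7]) [0..<7]"

lemma kdiag_KL: "kdiag N = LM (KL N)"
  by (rule eq_matI) (auto simp: kdiag_def LM_def KL_def)

lemma R_kdiag1: "R 1 = kdiag {1}"
proof -
  have "R 1 = LM (RL 1)" by (rule R_RL) simp_all
  also have "RL 1 = KL {1}" unfolding RL1 KL_def by (simp add: upt_rec)
  finally show ?thesis by (simp add: kdiag_KL)
qed
lemma R_kdiag2: "R 2 = kdiag {2}"
proof -
  have "R 2 = LM (RL 2)" by (rule R_RL) simp_all
  also have "RL 2 = KL {2}" unfolding RL2 KL_def by (simp add: upt_rec)
  finally show ?thesis by (simp add: kdiag_KL)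
qed
lemma R_kdiag3: "R 3 = kdiag {3}"
proof -
  have "R 3 = LM (RL 3)" by (rule R_RL) simp_all
  also have "RL 3 = KL {3}" unfolding RL3 KL_def by (simp add: upt_rec)
  finally show ?thesis by (simp add: kdiag_KL)
qed
lemma R_kdiag4: "R 4 = kdiag {4}"
proof -
  have "R 4 = LM (RL 4)" by (rule R_RL) simp_all
  also have "RL 4 = KL {4}" unfolding RL4 KL_def by (simp add: upt_rec)
  finally show ?thesis by (simp add: kdiag_KL)
qed
lemma R_kdiag5: "R 5 = kdiag {5}"
proof -
  have "R 5 = LM (RL 5)" by (rule R_RL) simp_all
  also have "RL 5 = KL {5}" unfolding RL5 KL_def by (simp add: upt_rec)
  finally show ?thesis by (simp add: kdiag_KL)
qed
lemma R_kdiag6: "R 6 = kdiag {6}"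
proof -
  have "R 6 = LM (RL 6)" by (rule R_RL) simp_all
  also have "RL 6 = KL {6}" unfolding RL6 KL_def by (simp add: upt_rec)
  finally show ?thesis by (simp add: kdiag_KL)
qed

lemma R_kdiag: "1 \<le> j \<Longrightarrow> j \<le> 6 \<Longrightarrow> R j = kdiag {j}"
proof -
  assume "1 \<le> j" "j \<le> 6"
  hence "j = 1 \<or> j = 2 \<or> j = 3 \<or> j = 4 \<or> j = 5 \<or> j = 6" by presburger
  thus ?thesis by (elim disjE) (simp_all only: R_kdiag1 R_kdiag2 R_kdiag3 R_kdiag4 R_kdiag5 R_kdiag6)
qed

definition phis :: "nat \<Rightarrow> nat set" where
  "phis j = (if j \<le> 6 then {j} else Ns ! (j - 7))"

fun ev :: "nat list \<Rightarrow> int mat" where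
  "ev [] = 1\<^sub>m 7"
| "ev (j # w) = R j * ev w"

fun wcol :: "nat list \<Rightarrow> nat set" where
  "wcol [] = {}"
| "wcol (j # w) = sd (phis j) (wcol w)"

lemma R_carrier[simp]: "R j \<in> carrier_mat 7 7" by (simp add: R_def)

lemma ev_carrier[simp]: "ev w \<in> carrier_mat 7 7" by (induction w) (auto intro!: mult_carrier_mat)

lemma ev_append: "ev (xs @ ys) = ev xs * ev ys"
  by (induction xs) (auto simp: assoc_mult_mat[of _ 7 7 _ 7 _ 7] left_mult_one_mat[of _ 7 7])

lemma col_append: "wcol (xs @ ys) = sd (wcol xs) (wcol ys)"
  by (induction xs) (auto simp: sd_assoc)

lemma one_G6: "1\<^sub>m 7 \<in> Gamma6" by (rule G6I) auto

lemma ev_G6: "set w \<subseteq> {1..27} \<Longrightarrow> ev w \<in> Gamma6"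
  by (induction w) (auto simp: one_G6 intro!: G6_mult R_G6)

lemma Ns_sub: "\<forall>j\<in>set [0..<21]. Ns ! j \<subseteq> {1..6}"
  by (simp add: Ns_def upt_rec)

lemma phis_sub: "1 \<le> j \<Longrightarrow> j \<le> 27 \<Longrightarrow> phis j \<subseteq> {1..6}"
  using Ns_sub by (auto simp: phis_def)

lemma col_sub: "set w \<subseteq> {1..27} \<Longrightarrow> wcol w \<subseteq> {1..6}"
  by (induction w) (use phis_sub in \<open>auto simp: sd_def\<close>)

lemma G6_simps[simp]: "carrier G6 = Gamma6" "mult G6 = (*)" "one G6 = 1\<^sub>m 7"
  by (simp_all add: G6_def)

lemma Gamma6_carrier: "M \<in> Gamma6 \<Longrightarrow> M \<in> carrier_mat 7 7" by (simp add: Gamma6_def)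

lemma inv_G6: "M \<in> Gamma6 \<Longrightarrow> inv\<^bsub>G6\<^esub> M = J * transpose_mat M * J"
  using group.inv_equality[OF group_G6, of "J * transpose_mat M * J" M] G6_inv by simp

definition wd :: "nat set \<Rightarrow> nat list" where "wd N = filter (\<lambda>i. i \<in> N) [1,2,3,4,5,6]"

lemma ev_kd: "distinct xs \<Longrightarrow> set xs \<subseteq> {1..6} \<Longrightarrow> ev xs = kdiag (set xs) \<and> wcol xs = set xs"
proof (induction xs)
  case Nil then show ?case by (simp add: kdiag_empty)
next
  case (Cons x xs)
  hence x: "1 \<le> x" "x \<le> 6" "x \<notin> set xs" by auto
  have "sd {x} (set xs) = insert x (set xs)" using x by (auto simp: sd_def)
  then show ?case using Cons x by (simp add: R_kdiag kdiag_mult phis_def)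
qed

lemma wd_props: "N \<subseteq> {1..6} \<Longrightarrow> ev (wd N) = kdiag N \<and> wcol (wd N) = N \<and> set (wd N) \<subseteq> {1..6}"
proof -
  assume N: "N \<subseteq> {1..6}"
  have six: "{1..6::nat} = {1,2,3,4,5,6}" by auto
  have "set (wd N) = N" using N unfolding six by (auto simp: wd_def)
  moreover have "distinct (wd N)" by (simp add: wd_def)
  ultimately show ?thesis using ev_kd[of "wd N"] N by auto
qed

lemma kdiag_G6: "N \<subseteq> {1..6} \<Longrightarrow> kdiag N \<in> Gamma6"
proof -
  assume N: "N \<subseteq> {1..6}"
  hence "set (wd N) \<subseteq> {1..27}" using wd_props[of N] by auto
  thus ?thesis using wd_props[OF N] ev_G6[of "wd N"] by auto
qed

definition Gens :: "int mat set" where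
  "Gens = {l * R j * l * k j | l j. l \<in> K6 \<and> 7 \<le> j \<and> j \<le> 27}"

lemma Hgrp_Gens: "Hgrp = generate G6 Gens" unfolding Hgrp_def Gens_def ..

lemma k_phis: "7 \<le> j \<Longrightarrow> k j = kdiag (phis j)" by (simp add: k_def phis_def)

lemma Gens_G6: "Gens \<subseteq> Gamma6"
proof
  fix x assume "x \<in> Gens"
  then obtain N j where x: "x = kdiag N * R j * kdiag N * k j" "N \<subseteq> {1..6}" "7 \<le> j" "j \<le> 27"
    by (auto simp: Gens_def K6_def)
  show "x \<in> Gamma6" unfolding x(1) k_phis[OF x(3)]
    using x phis_sub[of j] by (intro G6_mult kdiag_G6 R_G6) auto
qed

lemma H_G6: "Hgrp \<subseteq> Gamma6"
  unfolding Hgrp_Gens using group.generate_incl[OF group_G6, of Gens] Gens_G6 by simp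

lemma H_sub: "subgroup Hgrp G6"
  unfolding Hgrp_Gens using group.generate_is_subgroup[OF group_G6, of Gens] Gens_G6 by simp

lemma H_mult: "x \<in> Hgrp \<Longrightarrow> y \<in> Hgrp \<Longrightarrow> x * y \<in> Hgrp"
  using subgroup.m_closed[OF H_sub] by fastforce

lemma H_one: "1\<^sub>m 7 \<in> Hgrp"
  using subgroup.one_closed[OF H_sub] by fastforce

lemma Gens_H: "x \<in> Gens \<Longrightarrow> x \<in> Hgrp"
  unfolding Hgrp_Gens by (rule generate.incl)

lemma W: "set w \<subseteq> {1..27} \<Longrightarrow> N \<subseteq> {1..6} \<Longrightarrow> kdiag N * ev w * kdiag N * kdiag (wcol w) \<in> Hgrp"
proof (induction w arbitrary: N)
  case Nil then show ?case by (simp add: kdiag_mult kdiag_empty H_one right_mult_one_mat[of _ 7 7])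
next
  case (Cons s w)
  have s: "1 \<le> s" "s \<le> 27" and w: "set w \<subseteq> {1..27}" using Cons.prems by auto
  let ?a = "kdiag N" let ?f = "kdiag (phis s)" let ?a' = "kdiag (sd N (phis s))" let ?c = "kdiag (wcol w)"
  have N': "sd N (phis s) \<subseteq> {1..6}" using Cons.prems(2) phis_sub[OF s] by (auto simp: sd_def)
  have IH: "?a' * ev w * ?a' * ?c \<in> Hgrp" by (rule Cons.IH[OF w N'])
  have g: "?a * R s * ?a * ?f \<in> Hgrp"
  proof (cases "s \<le> 6")
    case True
    hence "R s = ?f" using s by (simp add: R_kdiag phis_def)
    hence "?a * R s * ?a * ?f = 1\<^sub>m 7" by (simp add: kdiag_mult kdiag_empty sd_comm)
    thus ?thesis using H_one by simp
  next
    case False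
    hence "?f = k s" by (simp add: k_phis)
    moreover have "?a \<in> K6" using Cons.prems(2) by (auto simp: K6_def)
    moreover have "7 \<le> s" using False by simp
    ultimately have "?a * R s * ?a * ?f \<in> Gens" using s unfolding Gens_def by (metis (mono_tags, lifting) mem_Collect_eq)
    thus ?thesis by (rule Gens_H)
  qed
  have eq: "kdiag N * ev (s # w) * kdiag N * kdiag (wcol (s # w)) = (?a * R s * ?a * ?f) * (?a' * ev w * ?a' * ?c)"
  proof -
    have "(?a * R s * ?a * ?f) * (?a' * ev w * ?a' * ?c) = ?a * (R s * (?a * (?f * (?a' * (ev w * (?a' * ?c))))))"
      by (simp add: assoc_mult_mat[of _ 7 7 _ 7 _ 7] mc7)
    also have "?a * (?f * (?a' * (ev w * (?a' * ?c)))) = ev w * (?a' * ?c)"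
      by (simp add: kdiag_mult2 mc7 kdiag_empty left_mult_one_mat[of _ 7 7])
    also have "?a' * ?c = kdiag (sd N (sd (phis s) (wcol w)))" by (simp add: kdiag_mult sd_assoc)
    also have "kdiag (sd N (sd (phis s) (wcol w))) = ?a * kdiag (sd (phis s) (wcol w))" by (simp add: kdiag_mult)
    finally show ?thesis by (simp add: assoc_mult_mat[of _ 7 7 _ 7 _ 7] mc7)
  qed
  show ?case unfolding eq by (rule H_mult[OF g IH])
qed

lemma ev_H: "set w \<subseteq> {1..27} \<Longrightarrow> wcol w = {} \<Longrightarrow> ev w \<in> Hgrp"
  using W[of w "{}"] by (simp add: kdiag_empty right_mult_one_mat[of _ 7 7] left_mult_one_mat[of _ 7 7])



lemma sd_simp2[simp]: "sd X (sd Y (sd X Z)) = sd Y Z" by (auto simp: sd_def)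

lemma R2R2: "R 2 * R 2 = 1\<^sub>m 7" by (simp add: R_kdiag kdiag_mult kdiag_empty)

lemma R2R2': "X \<in> carrier_mat 7 7 \<Longrightarrow> R 2 * (R 2 * X) = X"
  by (simp add: assoc_mult_mat[of _ 7 7 _ 7 _ 7, symmetric] R2R2)

lemma sg_rng: "1 \<le> j \<Longrightarrow> j \<le> 27 \<Longrightarrow> 1 \<le> sg j \<and> sg j \<le> 27"
  by (drule (1) in27) (elim disjE; simp only: sg_vals; simp)

lemma A_carrier[simp]: "A \<in> carrier_mat 7 7" using A_G6 by (rule Gamma6_carrier)

lemma conjA2: "1 \<le> j \<Longrightarrow> j \<le> 27 \<Longrightarrow> X \<in> carrier_mat 7 7 \<Longrightarrow> A * (R j * X) = R 2 * (R (sg j) * (R 2 * (A * X)))"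
  by (simp add: assoc_mult_mat[of _ 7 7 _ 7 _ 7, symmetric] mc7 conjA)

lemma Aev: "set w \<subseteq> {1..27} \<Longrightarrow> A * ev w = ev (2 # map sg w @ [2]) * A"
proof (induction w)
  case Nil then show ?case by (simp add: R2R2 right_mult_one_mat[of _ 7 7] left_mult_one_mat[of _ 7 7])
next
  case (Cons s w)
  hence s: "1 \<le> s" "s \<le> 27" and IH: "A * ev w = ev (2 # map sg w @ [2]) * A" by auto
  have "A * ev (s # w) = R 2 * (R (sg s) * (R 2 * (A * ev w)))" using s by (simp add: conjA2)
  also have "\<dots> = R 2 * (R (sg s) * (ev (map sg w @ [2]) * A))" unfolding IH by (simp add: assoc_mult_mat[of _ 7 7 _ 7 _ 7] mc7 R2R2')
  also have "\<dots> = ev (2 # map sg (s # w) @ [2]) * A" by (simp add: assoc_mult_mat[of _ 7 7 _ 7 _ 7] mc7)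
  finally show ?case .
qed

lemma invA: "inv\<^bsub>G6\<^esub> A = J * transpose_mat A * J" "A * (J * transpose_mat A * J) = 1\<^sub>m 7"
  "J * transpose_mat A * J \<in> Gamma6"
  using inv_G6[OF A_G6] G6_inv[OF A_G6] by auto

lemma sd_empty_test: "X \<subseteq> {1..6} \<Longrightarrow> Y \<subseteq> {1..6} \<Longrightarrow> (\<forall>i\<in>{1,2,3,4,5,6}. (i \<in> X) = (i \<in> Y)) \<Longrightarrow> sd X Y = {}"
proof -
  assume a: "X \<subseteq> {1..6}" "Y \<subseteq> {1..6}" "\<forall>i\<in>{1,2,3,4,5,6}. (i \<in> X) = (i \<in> Y)"
  have six: "{1..6::nat} = {1,2,3,4,5,6}" by auto
  show ?thesis using a unfolding six sd_def by blast
qed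

lemma sg1s: "sg (Suc 0) = Suc 0" by (simp add: sg_def)
lemma phis1: "phis 1 = {1}" by (simp add: phis_def Ns_def)
lemma phis2: "phis 2 = {2}" by (simp add: phis_def Ns_def)
lemma phis3: "phis 3 = {3}" by (simp add: phis_def Ns_def)
lemma phis4: "phis 4 = {4}" by (simp add: phis_def Ns_def)
lemma phis5: "phis 5 = {5}" by (simp add: phis_def Ns_def)
lemma phis6: "phis 6 = {6}" by (simp add: phis_def Ns_def)
lemma phis7: "phis 7 = {2,3,5}" by (simp add: phis_def Ns_def)
lemma phis8: "phis 8 = {1,2,3,4,5}" by (simp add: phis_def Ns_def)
lemma phis9: "phis 9 = {3,4,5}" by (simp add: phis_def Ns_def)
lemma phis10: "phis 10 = {1,2,3,5,6}" by (simp add: phis_def Ns_def)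
lemma phis11: "phis 11 = {1,4,6}" by (simp add: phis_def Ns_def)
lemma phis12: "phis 12 = {2,3,5}" by (simp add: phis_def Ns_def)
lemma phis13: "phis 13 = {3,4,5}" by (simp add: phis_def Ns_def)
lemma phis14: "phis 14 = {1,2,5}" by (simp add: phis_def Ns_def)
lemma phis15: "phis 15 = {5}" by (simp add: phis_def Ns_def)
lemma phis16: "phis 16 = {2,4,6}" by (simp add: phis_def Ns_def)
lemma phis17: "phis 17 = {1,2,5}" by (simp add: phis_def Ns_def)
lemma phis18: "phis 18 = {2,4,6}" by (simp add: phis_def Ns_def)
lemma phis19: "phis 19 = {6}" by (simp add: phis_def Ns_def)
lemma phis20: "phis 20 = {1,3,4}" by (simp add: phis_def Ns_def)
lemma phis21: "phis 21 = {1,2,3,5,6}" by (simp add: phis_def Ns_def)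
lemma phis22: "phis 22 = {1,3,4}" by (simp add: phis_def Ns_def)
lemma phis23: "phis 23 = {2}" by (simp add: phis_def Ns_def)
lemma phis24: "phis 24 = {1,4,6}" by (simp add: phis_def Ns_def)
lemma phis25: "phis 25 = {1,2,3,4,5}" by (simp add: phis_def Ns_def)
lemma phis26: "phis 26 = {4}" by (simp add: phis_def Ns_def)
lemma phis27: "phis 27 = {3}" by (simp add: phis_def Ns_def)
lemma phis1s: "phis (Suc 0) = {Suc 0}" by (simp add: phis_def)
lemmas phis_vals = phis1s phis1 phis2 phis3 phis4 phis5 phis6 phis7 phis8 phis9 phis10 phis11 phis12 phis13 phis14 phis15 phis16 phis17 phis18 phis19 phis20 phis21 phis22 phis23 phis24 phis25 phis26 phis27
lemma Ns0: "Ns ! 0 = {2,3,5}" by (simp add: Ns_def)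
lemma Ns1: "Ns ! 1 = {1,2,3,4,5}" by (simp add: Ns_def)
lemma Ns2: "Ns ! 2 = {3,4,5}" by (simp add: Ns_def)
lemma Ns3: "Ns ! 3 = {1,2,3,5,6}" by (simp add: Ns_def)
lemma Ns4: "Ns ! 4 = {1,4,6}" by (simp add: Ns_def)
lemma Ns5: "Ns ! 5 = {2,3,5}" by (simp add: Ns_def)
lemma Ns6: "Ns ! 6 = {3,4,5}" by (simp add: Ns_def)
lemma Ns7: "Ns ! 7 = {1,2,5}" by (simp add: Ns_def)
lemma Ns8: "Ns ! 8 = {5}" by (simp add: Ns_def)
lemma Ns9: "Ns ! 9 = {2,4,6}" by (simp add: Ns_def)
lemma Ns10: "Ns ! 10 = {1,2,5}" by (simp add: Ns_def)
lemma Ns11: "Ns ! 11 = {2,4,6}" by (simp add: Ns_def)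
lemma Ns12: "Ns ! 12 = {6}" by (simp add: Ns_def)
lemma Ns13: "Ns ! 13 = {1,3,4}" by (simp add: Ns_def)
lemma Ns14: "Ns ! 14 = {1,2,3,5,6}" by (simp add: Ns_def)
lemma Ns15: "Ns ! 15 = {1,3,4}" by (simp add: Ns_def)
lemma Ns16: "Ns ! 16 = {2}" by (simp add: Ns_def)
lemma Ns17: "Ns ! 17 = {1,4,6}" by (simp add: Ns_def)
lemma Ns18: "Ns ! 18 = {1,2,3,4,5}" by (simp add: Ns_def)
lemma Ns19: "Ns ! 19 = {4}" by (simp add: Ns_def)
lemma Ns20: "Ns ! 20 = {3}" by (simp add: Ns_def)
lemmas Ns_vals = Ns0 Ns1 Ns2 Ns3 Ns4 Ns5 Ns6 Ns7 Ns8 Ns9 Ns10 Ns11 Ns12 Ns13 Ns14 Ns15 Ns16 Ns17 Ns18 Ns19 Ns20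
lemma colc7: "sd (phis (sg 7)) (wcol (map sg (wd (Ns ! (7 - 7))))) = {}"
proof -
  have "Ns ! (7 - 7) = {2,3,5}" by (simp add: Ns_def)
  hence "map sg (wd (Ns ! (7 - 7))) = [11,5,18]" by (simp add: wd_def sg_vals sg1s)
  moreover have "sd (phis (sg 7)) (wcol [11,5,18]) = {}"
    by (rule sd_empty_test) (auto simp: phis_vals sg_vals sg1s sd_def)
  ultimately show ?thesis by simp
qed
lemma colc8: "sd (phis (sg 8)) (wcol (map sg (wd (Ns ! (8 - 7))))) = {}"
proof -
  have "Ns ! (8 - 7) = {1,2,3,4,5}" by (simp add: Ns_def)
  hence "map sg (wd (Ns ! (8 - 7))) = [1,11,5,20,18]" by (simp add: wd_def sg_vals sg1s)
  moreover have "sd (phis (sg 8)) (wcol [1,11,5,20,18]) = {}"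
    by (rule sd_empty_test) (auto simp: phis_vals sg_vals sg1s sd_def)
  ultimately show ?thesis by simp
qed
lemma colc9: "sd (phis (sg 9)) (wcol (map sg (wd (Ns ! (9 - 7))))) = {}"
proof -
  have "Ns ! (9 - 7) = {3,4,5}" by (simp add: Ns_def)
  hence "map sg (wd (Ns ! (9 - 7))) = [5,20,18]" by (simp add: wd_def sg_vals sg1s)
  moreover have "sd (phis (sg 9)) (wcol [5,20,18]) = {}"
    by (rule sd_empty_test) (auto simp: phis_vals sg_vals sg1s sd_def)
  ultimately show ?thesis by simp
qed
lemma colc10: "sd (phis (sg 10)) (wcol (map sg (wd (Ns ! (10 - 7))))) = {}"
proof -
  have "Ns ! (10 - 7) = {1,2,3,5,6}" by (simp add: Ns_def)
  hence "map sg (wd (Ns ! (10 - 7))) = [1,11,5,18,3]" by (simp add: wd_def sg_vals sg1s)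
  moreover have "sd (phis (sg 10)) (wcol [1,11,5,18,3]) = {}"
    by (rule sd_empty_test) (auto simp: phis_vals sg_vals sg1s sd_def)
  ultimately show ?thesis by simp
qed
lemma colc11: "sd (phis (sg 11)) (wcol (map sg (wd (Ns ! (11 - 7))))) = {}"
proof -
  have "Ns ! (11 - 7) = {1,4,6}" by (simp add: Ns_def)
  hence "map sg (wd (Ns ! (11 - 7))) = [1,20,3]" by (simp add: wd_def sg_vals sg1s)
  moreover have "sd (phis (sg 11)) (wcol [1,20,3]) = {}"
    by (rule sd_empty_test) (auto simp: phis_vals sg_vals sg1s sd_def)
  ultimately show ?thesis by simp
qed
lemma colc12: "sd (phis (sg 12)) (wcol (map sg (wd (Ns ! (12 - 7))))) = {}"
proof -
  have "Ns ! (12 - 7) = {2,3,5}" by (simp add: Ns_def)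
  hence "map sg (wd (Ns ! (12 - 7))) = [11,5,18]" by (simp add: wd_def sg_vals sg1s)
  moreover have "sd (phis (sg 12)) (wcol [11,5,18]) = {}"
    by (rule sd_empty_test) (auto simp: phis_vals sg_vals sg1s sd_def)
  ultimately show ?thesis by simp
qed
lemma colc13: "sd (phis (sg 13)) (wcol (map sg (wd (Ns ! (13 - 7))))) = {}"
proof -
  have "Ns ! (13 - 7) = {3,4,5}" by (simp add: Ns_def)
  hence "map sg (wd (Ns ! (13 - 7))) = [5,20,18]" by (simp add: wd_def sg_vals sg1s)
  moreover have "sd (phis (sg 13)) (wcol [5,20,18]) = {}"
    by (rule sd_empty_test) (auto simp: phis_vals sg_vals sg1s sd_def)
  ultimately show ?thesis by simp
qed
lemma colc14: "sd (phis (sg 14)) (wcol (map sg (wd (Ns ! (14 - 7))))) = {}"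
proof -
  have "Ns ! (14 - 7) = {1,2,5}" by (simp add: Ns_def)
  hence "map sg (wd (Ns ! (14 - 7))) = [1,11,18]" by (simp add: wd_def sg_vals sg1s)
  moreover have "sd (phis (sg 14)) (wcol [1,11,18]) = {}"
    by (rule sd_empty_test) (auto simp: phis_vals sg_vals sg1s sd_def)
  ultimately show ?thesis by simp
qed
lemma colc15: "sd (phis (sg 15)) (wcol (map sg (wd (Ns ! (15 - 7))))) = {}"
proof -
  have "Ns ! (15 - 7) = {5}" by (simp add: Ns_def)
  hence "map sg (wd (Ns ! (15 - 7))) = [18]" by (simp add: wd_def sg_vals sg1s)
  moreover have "sd (phis (sg 15)) (wcol [18]) = {}"
    by (rule sd_empty_test) (auto simp: phis_vals sg_vals sg1s sd_def)
  ultimately show ?thesis by simp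
qed
lemma colc16: "sd (phis (sg 16)) (wcol (map sg (wd (Ns ! (16 - 7))))) = {}"
proof -
  have "Ns ! (16 - 7) = {2,4,6}" by (simp add: Ns_def)
  hence "map sg (wd (Ns ! (16 - 7))) = [11,20,3]" by (simp add: wd_def sg_vals sg1s)
  moreover have "sd (phis (sg 16)) (wcol [11,20,3]) = {}"
    by (rule sd_empty_test) (auto simp: phis_vals sg_vals sg1s sd_def)
  ultimately show ?thesis by simp
qed
lemma colc17: "sd (phis (sg 17)) (wcol (map sg (wd (Ns ! (17 - 7))))) = {}"
proof -
  have "Ns ! (17 - 7) = {1,2,5}" by (simp add: Ns_def)
  hence "map sg (wd (Ns ! (17 - 7))) = [1,11,18]" by (simp add: wd_def sg_vals sg1s)
  moreover have "sd (phis (sg 17)) (wcol [1,11,18]) = {}"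
    by (rule sd_empty_test) (auto simp: phis_vals sg_vals sg1s sd_def)
  ultimately show ?thesis by simp
qed
lemma colc18: "sd (phis (sg 18)) (wcol (map sg (wd (Ns ! (18 - 7))))) = {}"
proof -
  have "Ns ! (18 - 7) = {2,4,6}" by (simp add: Ns_def)
  hence "map sg (wd (Ns ! (18 - 7))) = [11,20,3]" by (simp add: wd_def sg_vals sg1s)
  moreover have "sd (phis (sg 18)) (wcol [11,20,3]) = {}"
    by (rule sd_empty_test) (auto simp: phis_vals sg_vals sg1s sd_def)
  ultimately show ?thesis by simp
qed
lemma colc19: "sd (phis (sg 19)) (wcol (map sg (wd (Ns ! (19 - 7))))) = {}"
proof -
  have "Ns ! (19 - 7) = {6}" by (simp add: Ns_def)
  hence "map sg (wd (Ns ! (19 - 7))) = [3]" by (simp add: wd_def sg_vals sg1s)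
  moreover have "sd (phis (sg 19)) (wcol [3]) = {}"
    by (rule sd_empty_test) (auto simp: phis_vals sg_vals sg1s sd_def)
  ultimately show ?thesis by simp
qed
lemma colc20: "sd (phis (sg 20)) (wcol (map sg (wd (Ns ! (20 - 7))))) = {}"
proof -
  have "Ns ! (20 - 7) = {1,3,4}" by (simp add: Ns_def)
  hence "map sg (wd (Ns ! (20 - 7))) = [1,5,20]" by (simp add: wd_def sg_vals sg1s)
  moreover have "sd (phis (sg 20)) (wcol [1,5,20]) = {}"
    by (rule sd_empty_test) (auto simp: phis_vals sg_vals sg1s sd_def)
  ultimately show ?thesis by simp
qed
lemma colc21: "sd (phis (sg 21)) (wcol (map sg (wd (Ns ! (21 - 7))))) = {}"
proof -
  have "Ns ! (21 - 7) = {1,2,3,5,6}" by (simp add: Ns_def)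
  hence "map sg (wd (Ns ! (21 - 7))) = [1,11,5,18,3]" by (simp add: wd_def sg_vals sg1s)
  moreover have "sd (phis (sg 21)) (wcol [1,11,5,18,3]) = {}"
    by (rule sd_empty_test) (auto simp: phis_vals sg_vals sg1s sd_def)
  ultimately show ?thesis by simp
qed
lemma colc22: "sd (phis (sg 22)) (wcol (map sg (wd (Ns ! (22 - 7))))) = {}"
proof -
  have "Ns ! (22 - 7) = {1,3,4}" by (simp add: Ns_def)
  hence "map sg (wd (Ns ! (22 - 7))) = [1,5,20]" by (simp add: wd_def sg_vals sg1s)
  moreover have "sd (phis (sg 22)) (wcol [1,5,20]) = {}"
    by (rule sd_empty_test) (auto simp: phis_vals sg_vals sg1s sd_def)
  ultimately show ?thesis by simp
qed
lemma colc23: "sd (phis (sg 23)) (wcol (map sg (wd (Ns ! (23 - 7))))) = {}"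
proof -
  have "Ns ! (23 - 7) = {2}" by (simp add: Ns_def)
  hence "map sg (wd (Ns ! (23 - 7))) = [11]" by (simp add: wd_def sg_vals sg1s)
  moreover have "sd (phis (sg 23)) (wcol [11]) = {}"
    by (rule sd_empty_test) (auto simp: phis_vals sg_vals sg1s sd_def)
  ultimately show ?thesis by simp
qed
lemma colc24: "sd (phis (sg 24)) (wcol (map sg (wd (Ns ! (24 - 7))))) = {}"
proof -
  have "Ns ! (24 - 7) = {1,4,6}" by (simp add: Ns_def)
  hence "map sg (wd (Ns ! (24 - 7))) = [1,20,3]" by (simp add: wd_def sg_vals sg1s)
  moreover have "sd (phis (sg 24)) (wcol [1,20,3]) = {}"
    by (rule sd_empty_test) (auto simp: phis_vals sg_vals sg1s sd_def)
  ultimately show ?thesis by simp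
qed
lemma colc25: "sd (phis (sg 25)) (wcol (map sg (wd (Ns ! (25 - 7))))) = {}"
proof -
  have "Ns ! (25 - 7) = {1,2,3,4,5}" by (simp add: Ns_def)
  hence "map sg (wd (Ns ! (25 - 7))) = [1,11,5,20,18]" by (simp add: wd_def sg_vals sg1s)
  moreover have "sd (phis (sg 25)) (wcol [1,11,5,20,18]) = {}"
    by (rule sd_empty_test) (auto simp: phis_vals sg_vals sg1s sd_def)
  ultimately show ?thesis by simp
qed
lemma colc26: "sd (phis (sg 26)) (wcol (map sg (wd (Ns ! (26 - 7))))) = {}"
proof -
  have "Ns ! (26 - 7) = {4}" by (simp add: Ns_def)
  hence "map sg (wd (Ns ! (26 - 7))) = [20]" by (simp add: wd_def sg_vals sg1s)
  moreover have "sd (phis (sg 26)) (wcol [20]) = {}"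
    by (rule sd_empty_test) (auto simp: phis_vals sg_vals sg1s sd_def)
  ultimately show ?thesis by simp
qed
lemma colc27: "sd (phis (sg 27)) (wcol (map sg (wd (Ns ! (27 - 7))))) = {}"
proof -
  have "Ns ! (27 - 7) = {3}" by (simp add: Ns_def)
  hence "map sg (wd (Ns ! (27 - 7))) = [5]" by (simp add: wd_def sg_vals sg1s)
  moreover have "sd (phis (sg 27)) (wcol [5]) = {}"
    by (rule sd_empty_test) (auto simp: phis_vals sg_vals sg1s sd_def)
  ultimately show ?thesis by simp
qed
lemmas colcs = colc7 colc8 colc9 colc10 colc11 colc12 colc13 colc14 colc15 colc16 colc17 colc18 colc19 colc20 colc21 colc22 colc23 colc24 colc25 colc26 colc27



lemma colc: "7 \<le> j \<Longrightarrow> j \<le> 27 \<Longrightarrow> sd (phis (sg j)) (wcol (map sg (wd (Ns ! (j - 7))))) = {}"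
proof -
  assume "7 \<le> j" "j \<le> 27"
  hence "j = 7 \<or> j = 8 \<or> j = 9 \<or> j = 10 \<or> j = 11 \<or> j = 12 \<or> j = 13 \<or> j = 14 \<or> j = 15 \<or> j = 16 \<or> j = 17 \<or> j = 18 \<or> j = 19 \<or> j = 20 \<or> j = 21 \<or> j = 22 \<or> j = 23 \<or> j = 24 \<or> j = 25 \<or> j = 26 \<or> j = 27" by presburger
  thus ?thesis by (elim disjE) (simp_all only: colcs)
qed

lemma sd_simp3[simp]: "sd X (sd Y X) = Y" "sd Z (sd X (sd Y Z)) = sd X Y" by (auto simp: sd_def)

lemma Ns_sub': "7 \<le> j \<Longrightarrow> j \<le> 27 \<Longrightarrow> Ns ! (j - 7) \<subseteq> {1..6}"
  using Ns_sub by auto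

lemma gen_word: assumes N: "N \<subseteq> {1..6}" and j: "7 \<le> j" "j \<le> 27"
  shows "kdiag N * R j * kdiag N * k j = ev (wd N @ j # wd N @ wd (Ns ! (j - 7)))"
proof -
  have "k j = ev (wd (Ns ! (j - 7)))" using wd_props[OF Ns_sub'[OF j]] by (simp add: k_def)
  moreover have "kdiag N = ev (wd N)" using wd_props[OF N] by simp
  ultimately show ?thesis by (simp add: ev_append assoc_mult_mat[of _ 7 7 _ 7 _ 7] mc7)
qed

lemma conj_gen: assumes "x \<in> Gens" shows "A * x * (J * transpose_mat A * J) \<in> Hgrp"
proof -
  obtain N j where x: "x = kdiag N * R j * kdiag N * k j" "N \<subseteq> {1..6}" "7 \<le> j" "j \<le> 27"
    using assms by (auto simp: Gens_def K6_def)
  define wx where "wx = wd N @ j # wd N @ wd (Ns ! (j - 7))"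
  have xw: "x = ev wx" unfolding x(1) wx_def by (rule gen_word[OF x(2-4)])
  have swx: "set wx \<subseteq> {1..27}" unfolding wx_def using wd_props[OF x(2)] wd_props[OF Ns_sub'[OF x(3,4)]] x(3,4) by auto
  let ?w = "2 # map sg wx @ [2]"
  have sw: "set ?w \<subseteq> {1..27}" using swx sg_rng by auto
  have "A * x * (J * transpose_mat A * J) = ev ?w * (A * (J * transpose_mat A * J))"
    unfolding xw Aev[OF swx] by (simp add: assoc_mult_mat[of _ 7 7 _ 7 _ 7] mc7)
  also have "\<dots> = ev ?w" using invA(2) by (simp add: right_mult_one_mat[of _ 7 7] mc7)
  finally have e: "A * x * (J * transpose_mat A * J) = ev ?w" .
  have "wcol ?w = sd (phis (sg j)) (wcol (map sg (wd (Ns ! (j - 7)))))"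
    unfolding wx_def by (simp add: col_append phis2)
  also have "\<dots> = {}" using colc[OF x(3,4)] .
  finally show ?thesis unfolding e by (rule ev_H[OF sw])
qed

lemma conj_H: assumes "h \<in> Hgrp" shows "A * h * inv\<^bsub>G6\<^esub> A \<in> Hgrp"
  using assms unfolding Hgrp_Gens
proof (induction rule: generate.induct)
  interpret G: group G6 by (rule group_G6)
  case one
  show ?case using G.r_inv[of A] A_G6 H_one unfolding Hgrp_Gens by (simp add: right_mult_one_mat[of _ 7 7])
next
  case (incl h) then show ?case using conj_gen invA(1) unfolding Hgrp_Gens by simp
next
  interpret G: group G6 by (rule group_G6)
  case (inv h)
  have h: "h \<in> Gamma6" using inv Gens_G6 by auto
  have c: "A * h * inv\<^bsub>G6\<^esub> A \<in> generate G6 Gens" using conj_gen[OF inv] invA(1) unfolding Hgrp_Gens by simp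
  have iA: "inv\<^bsub>G6\<^esub> A \<in> Gamma6" and ih: "inv\<^bsub>G6\<^esub> h \<in> Gamma6" using A_G6 h G.inv_closed by auto
  have "inv\<^bsub>G6\<^esub> (A * h * inv\<^bsub>G6\<^esub> A) = inv\<^bsub>G6\<^esub> (inv\<^bsub>G6\<^esub> A) * inv\<^bsub>G6\<^esub> (A * h)"
    using G.inv_mult_group[of "A * h" "inv\<^bsub>G6\<^esub> A"] A_G6 h iA G6_mult by simp
  also have "\<dots> = A * (inv\<^bsub>G6\<^esub> h * inv\<^bsub>G6\<^esub> A)"
    using G.inv_mult_group[of A h] A_G6 h by simp
  also have "\<dots> = A * inv\<^bsub>G6\<^esub> h * inv\<^bsub>G6\<^esub> A"
    using Gamma6_carrier[OF iA] Gamma6_carrier[OF ih] by (simp add: assoc_mult_mat[of _ 7 7 _ 7 _ 7])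
  finally have "inv\<^bsub>G6\<^esub> (A * h * inv\<^bsub>G6\<^esub> A) = A * inv\<^bsub>G6\<^esub> h * inv\<^bsub>G6\<^esub> A" .
  with G.generate_m_inv_closed[OF Gens_G6[simplified G6_simps(1)[symmetric]] c] show ?case by simp
next
  interpret G: group G6 by (rule group_G6)
  case (eng h1 h2)
  have h1: "h1 \<in> Gamma6" and h2: "h2 \<in> Gamma6"
    using eng(1,2) G.generate_in_carrier[of Gens] Gens_G6 by auto
  have Ai: "inv\<^bsub>G6\<^esub> A \<in> Gamma6" using A_G6 G.inv_closed by simp
  have "A * (h1 * h2) * inv\<^bsub>G6\<^esub> A = (A * h1 * inv\<^bsub>G6\<^esub> A) * (A * h2 * inv\<^bsub>G6\<^esub> A)"
  proof -
    have "inv\<^bsub>G6\<^esub> A * A = 1\<^sub>m 7" using G.l_inv[of A] A_G6 by simp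
    hence iAA: "inv\<^bsub>G6\<^esub> A * (A * X) = X" if "X \<in> carrier_mat 7 7" for X
      using that Gamma6_carrier[OF Ai] by (simp add: assoc_mult_mat[of _ 7 7 _ 7 _ 7, symmetric])
    have "(A * h1 * inv\<^bsub>G6\<^esub> A) * (A * h2 * inv\<^bsub>G6\<^esub> A) = A * (h1 * h2) * inv\<^bsub>G6\<^esub> A"
      using h1 h2 Ai A_G6 by (simp add: assoc_mult_mat[of _ 7 7 _ 7 _ 7] mc7 Gamma6_carrier iAA)
    thus ?thesis by simp
  qed
  then show ?case using eng(3,4) H_mult unfolding Hgrp_Gens by simp
qed

definition IL :: "int list list" where
  "IL = [[1,0,0,0,0,0,0],[0,1,0,0,0,0,0],[0,0,1,0,0,0,0],[0,0,0,1,0,0,0],[0,0,0,0,1,0,0],[0,0,0,0,0,1,0],[0,0,0,0,0,0,1]]"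

lemma one_IL: "1\<^sub>m 7 = LM IL"
proof (rule eq_matI)
  fix i j assume "i < dim_row (LM IL)" "j < dim_col (LM IL)"
  hence "i < 7" "j < 7" by (auto simp: LM_def)
  hence "i \<in> {0,1,2,3,4,5,6}" "j \<in> {0,1,2,3,4,5,6}" by auto
  thus "1\<^sub>m 7 $$ (i,j) = LM IL $$ (i,j)" by (auto simp: LM_def IL_def)
qed (auto simp: LM_def)

lemma wf7_IL: "wf7 IL" by (simp add: wf7_def IL_def)

fun lpw :: "nat \<Rightarrow> int list list" where
  "lpw 0 = IL"
| "lpw (Suc n) = lmul (lpw n) AL"

lemma wf7_lpw: "wf7 (lpw n)" by (induction n) (auto simp: wf7_IL wf7_lmul wf7_AL)

lemma Apow: "A [^]\<^bsub>G6\<^esub> (n::nat) = LM (lpw n)"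
  by (induction n) (simp_all add: one_IL A_AL LM_mult wf7_lpw wf7_AL)

fun evL :: "nat list \<Rightarrow> int list list" where
  "evL [] = IL"
| "evL (j # w) = lmul (RL j) (evL w)"

lemma ev_evL: "set w \<subseteq> {1..27} \<Longrightarrow> ev w = LM (evL w) \<and> wf7 (evL w)"
  by (induction w) (auto simp: one_IL wf7_IL R_RL LM_mult wf7_RL wf7_lmul)

lemma lpw8: "lpw (Suc(Suc(Suc(Suc(Suc(Suc(Suc(Suc 0)))))))) = evL [2,11,4,20,9,21,12,14]"
  by (simp only: lpw.simps evL.simps RL_lits AL_def IL_def) (simp add: lmul_def)

lemma A8_ev: "A [^]\<^bsub>G6\<^esub> (8::nat) = ev [2,11,4,20,9,21,12,14]"
proof -
  have "(8::nat) = Suc(Suc(Suc(Suc(Suc(Suc(Suc(Suc 0)))))))" by simp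
  hence "A [^]\<^bsub>G6\<^esub> (8::nat) = LM (lpw (Suc(Suc(Suc(Suc(Suc(Suc(Suc(Suc 0)))))))))" by (simp only: Apow)
  also have "\<dots> = ev [2,11,4,20,9,21,12,14]" unfolding lpw8 by (subst ev_evL) auto
  finally show ?thesis .
qed

lemma A8_H: "A [^]\<^bsub>G6\<^esub> (8::nat) \<in> Hgrp"
proof -
  have "wcol [2,11,4,20,9,21,12,14] = {}"
    by (simp only: wcol.simps phis_vals) (rule sd_empty_test, auto simp: sd_def)
  thus ?thesis unfolding A8_ev by (intro ev_H) auto
qed

definition cong2 :: "int mat \<Rightarrow> bool" where
  "cong2 M \<longleftrightarrow> M \<in> carrier_mat 7 7 \<and> (\<forall>i<7. \<forall>j<7. even (M $$ (i,j) - (if i = j then 1 else 0)))"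

lemma notc_LM: assumes "i < 7" "j < 7" "odd (X ! i ! j - (if i = j then 1 else 0))" shows "\<not> cong2 (LM X)"
proof
  assume "cong2 (LM X)"
  hence "even (LM X $$ (i,j) - (if i = j then 1 else 0))" using assms(1,2) unfolding cong2_def by blast
  moreover have "LM X $$ (i,j) = X ! i ! j" using assms(1,2) by (simp add: LM_def)
  ultimately show False using assms(3) by simp
qed

lemma notc1: "\<not> cong2 (A [^]\<^bsub>G6\<^esub> (1::nat))"
proof -
  have "(1::nat) = Suc (0)" by simp
  hence "A [^]\<^bsub>G6\<^esub> (1::nat) = LM (lpw (Suc (0)))" by (simp only: Apow)
  moreover have "odd (lpw (Suc (0)) ! 1 ! 4 - (if (1::nat) = 4 then 1 else 0))"
    by (simp only: lpw.simps AL_def IL_def) (simp add: lmul_def)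
  ultimately show ?thesis using notc_LM[of 1 4 "lpw (Suc (0))"] by simp
qed
lemma notc2: "\<not> cong2 (A [^]\<^bsub>G6\<^esub> (2::nat))"
proof -
  have "(2::nat) = Suc (Suc (0))" by simp
  hence "A [^]\<^bsub>G6\<^esub> (2::nat) = LM (lpw (Suc (Suc (0))))" by (simp only: Apow)
  moreover have "odd (lpw (Suc (Suc (0))) ! 1 ! 1 - (if (1::nat) = 1 then 1 else 0))"
    by (simp only: lpw.simps AL_def IL_def) (simp add: lmul_def)
  ultimately show ?thesis using notc_LM[of 1 1 "lpw (Suc (Suc (0)))"] by simp
qed
lemma notc3: "\<not> cong2 (A [^]\<^bsub>G6\<^esub> (3::nat))"
proof -
  have "(3::nat) = Suc (Suc (Suc (0)))" by simp
  hence "A [^]\<^bsub>G6\<^esub> (3::nat) = LM (lpw (Suc (Suc (Suc (0)))))" by (simp only: Apow)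
  moreover have "odd (lpw (Suc (Suc (Suc (0)))) ! 1 ! 1 - (if (1::nat) = 1 then 1 else 0))"
    by (simp only: lpw.simps AL_def IL_def) (simp add: lmul_def)
  ultimately show ?thesis using notc_LM[of 1 1 "lpw (Suc (Suc (Suc (0))))"] by simp
qed
lemma notc4: "\<not> cong2 (A [^]\<^bsub>G6\<^esub> (4::nat))"
proof -
  have "(4::nat) = Suc (Suc (Suc (Suc (0))))" by simp
  hence "A [^]\<^bsub>G6\<^esub> (4::nat) = LM (lpw (Suc (Suc (Suc (Suc (0))))))" by (simp only: Apow)
  moreover have "odd (lpw (Suc (Suc (Suc (Suc (0))))) ! 1 ! 2 - (if (1::nat) = 2 then 1 else 0))"
    by (simp only: lpw.simps AL_def IL_def) (simp add: lmul_def)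
  ultimately show ?thesis using notc_LM[of 1 2 "lpw (Suc (Suc (Suc (Suc (0)))))"] by simp
qed
lemma notc5: "\<not> cong2 (A [^]\<^bsub>G6\<^esub> (5::nat))"
proof -
  have "(5::nat) = Suc (Suc (Suc (Suc (Suc (0)))))" by simp
  hence "A [^]\<^bsub>G6\<^esub> (5::nat) = LM (lpw (Suc (Suc (Suc (Suc (Suc (0)))))))" by (simp only: Apow)
  moreover have "odd (lpw (Suc (Suc (Suc (Suc (Suc (0)))))) ! 1 ! 1 - (if (1::nat) = 1 then 1 else 0))"
    by (simp only: lpw.simps AL_def IL_def) (simp add: lmul_def)
  ultimately show ?thesis using notc_LM[of 1 1 "lpw (Suc (Suc (Suc (Suc (Suc (0))))))"] by simp
qed
lemma notc6: "\<not> cong2 (A [^]\<^bsub>G6\<^esub> (6::nat))"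
proof -
  have "(6::nat) = Suc (Suc (Suc (Suc (Suc (Suc (0))))))" by simp
  hence "A [^]\<^bsub>G6\<^esub> (6::nat) = LM (lpw (Suc (Suc (Suc (Suc (Suc (Suc (0))))))))" by (simp only: Apow)
  moreover have "odd (lpw (Suc (Suc (Suc (Suc (Suc (Suc (0))))))) ! 1 ! 1 - (if (1::nat) = 1 then 1 else 0))"
    by (simp only: lpw.simps AL_def IL_def) (simp add: lmul_def)
  ultimately show ?thesis using notc_LM[of 1 1 "lpw (Suc (Suc (Suc (Suc (Suc (Suc (0)))))))"] by simp
qed
lemma notc7: "\<not> cong2 (A [^]\<^bsub>G6\<^esub> (7::nat))"
proof -
  have "(7::nat) = Suc (Suc (Suc (Suc (Suc (Suc (Suc (0)))))))" by simp
  hence "A [^]\<^bsub>G6\<^esub> (7::nat) = LM (lpw (Suc (Suc (Suc (Suc (Suc (Suc (Suc (0)))))))))" by (simp only: Apow)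
  moreover have "odd (lpw (Suc (Suc (Suc (Suc (Suc (Suc (Suc (0)))))))) ! 1 ! 3 - (if (1::nat) = 3 then 1 else 0))"
    by (simp only: lpw.simps AL_def IL_def) (simp add: lmul_def)
  ultimately show ?thesis using notc_LM[of 1 3 "lpw (Suc (Suc (Suc (Suc (Suc (Suc (Suc (0))))))))"] by simp
qed

lemma cong2_mult: assumes "cong2 M" "cong2 N" shows "cong2 (M * N)"
proof -
  have M: "M \<in> carrier_mat 7 7" and N: "N \<in> carrier_mat 7 7" using assms by (auto simp: cong2_def)
  have eM: "\<And>i j. i < 7 \<Longrightarrow> j < 7 \<Longrightarrow> even (M $$ (i,j) - (if i = j then 1 else 0))"
   and eN: "\<And>i j. i < 7 \<Longrightarrow> j < 7 \<Longrightarrow> even (N $$ (i,j) - (if i = j then 1 else 0))"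
    using assms by (auto simp: cong2_def)
  have "even ((M * N) $$ (i,j) - (if i = j then 1 else 0))" if ij: "i < 7" "j < 7" for i j
  proof -
    let ?d = "\<lambda>a b. if a = b then 1 else (0::int)"
    have "(\<Sum>k\<in>{0..<7}. ?d i k * ?d k j) = (\<Sum>k\<in>{0..<7}. if k = i then ?d i j else 0)"
      by (rule sum.cong) auto
    also have "\<dots> = ?d i j" using ij by simp
    finally have dd: "(\<Sum>k\<in>{0..<7}. ?d i k * ?d k j) = ?d i j" .
    have "(M * N) $$ (i,j) - ?d i j = (\<Sum>k\<in>{0..<7}. M $$ (i,k) * N $$ (k,j)) - (\<Sum>k\<in>{0..<7}. ?d i k * ?d k j)"
      using M N ij dd by (simp add: scalar_prod_def)
    also have "\<dots> = (\<Sum>k\<in>{0..<7}. (M $$ (i,k) - ?d i k) * N $$ (k,j) + ?d i k * (N $$ (k,j) - ?d k j))"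
      by (simp add: sum_subtractf[symmetric] algebra_simps)
    finally have eq: "(M * N) $$ (i,j) - ?d i j = (\<Sum>k\<in>{0..<7}. (M $$ (i,k) - ?d i k) * N $$ (k,j) + ?d i k * (N $$ (k,j) - ?d k j))" .
    have "even (\<Sum>k\<in>{0..<7}. (M $$ (i,k) - ?d i k) * N $$ (k,j) + ?d i k * (N $$ (k,j) - ?d k j))"
      using eM[OF ij(1)] eN[OF _ ij(2)] by (intro dvd_sum) auto
    thus ?thesis using eq by simp
  qed
  thus ?thesis using M N by (auto simp: cong2_def)
qed

lemma JXJ: assumes X: "X \<in> carrier_mat 7 7" and ij: "i < 7" "j < 7"
  shows "(J * X * J) $$ (i,j) = (if i < 6 then 1 else -1) * X $$ (i,j) * (if j < 6 then 1 else -1)"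
proof -
  let ?s = "\<lambda>i. if i < 6 then 1 else (-1::int)"
  have Jent: "J $$ (a,b) = (if a = b then ?s a else 0)" if "a < 7" "b < 7" for a b
    using that by (simp add: J_def)
  have JX: "(J * X) $$ (i,k) = ?s i * X $$ (i,k)" if "k < 7" for k
  proof -
    have "(J * X) $$ (i,k) = (\<Sum>m\<in>{0..<7}. J $$ (i,m) * X $$ (m,k))"
      using X ij that by (simp add: scalar_prod_def)
    also have "\<dots> = (\<Sum>m\<in>{0..<7}. if m = i then ?s i * X $$ (i,k) else 0)" by (rule sum.cong) (auto simp: Jent ij)
    finally show ?thesis using ij by simp
  qed
  define Y where "Y = J * X"
  have Y: "Y \<in> carrier_mat 7 7" unfolding Y_def using X by (simp add: mc7)
  have "(Y * J) $$ (i,j) = (\<Sum>m\<in>{0..<7}. Y $$ (i,m) * J $$ (m,j))"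
    using Y ij by (simp add: scalar_prod_def)
  also have "\<dots> = (\<Sum>m\<in>{0..<7}. if m = j then Y $$ (i,j) * ?s j else 0)" by (rule sum.cong) (auto simp: Jent ij)
  also have "\<dots> = Y $$ (i,j) * ?s j" using ij by simp
  finally show ?thesis using JX[OF ij(2)] unfolding Y_def by simp
qed

lemma cong2_inv: assumes "cong2 M" shows "cong2 (J * transpose_mat M * J)"
proof -
  have M: "M \<in> carrier_mat 7 7" using assms by (auto simp: cong2_def)
  have eM: "\<And>i j. i < 7 \<Longrightarrow> j < 7 \<Longrightarrow> even (M $$ (i,j) - (if i = j then 1 else 0))"
    using assms by (auto simp: cong2_def)
  have "even ((J * transpose_mat M * J) $$ (i,j) - (if i = j then 1 else 0))" if ij: "i < 7" "j < 7" for i j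
  proof (cases "i = j")
    case True
    then show ?thesis using JXJ[of "transpose_mat M" i j] M ij eM[of j i] by auto
  next
    case False
    then show ?thesis using JXJ[of "transpose_mat M" i j] M ij eM[of j i] by auto
  qed
  thus ?thesis using M by (auto simp: cong2_def intro!: mult_carrier_mat)
qed

lemma cong2_R: "1 \<le> j \<Longrightarrow> j \<le> 27 \<Longrightarrow> cong2 (R j)"
  by (auto simp: R_RL cong2_def LM_def RL_def)

lemma cong2_kdiag: "cong2 (kdiag N)"
  by (auto simp: cong2_def kdiag_def)

lemma cong2_Gens: "x \<in> Gens \<Longrightarrow> cong2 x"
  by (auto simp: Gens_def K6_def k_def intro!: cong2_mult cong2_R cong2_kdiag)

lemma H_cong2: "h \<in> Hgrp \<Longrightarrow> cong2 h"
  unfolding Hgrp_Gens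
proof (induction rule: generate.induct)
  case one then show ?case by (simp add: cong2_def)
next
  case (incl h) then show ?case by (rule cong2_Gens)
next
  case (inv h)
  then show ?case using inv_G6[of h] Gens_G6 cong2_inv[OF cong2_Gens[OF inv]] by auto
next
  case (eng h1 h2) then show ?case by (simp add: cong2_mult)
qed

lemma Apow_notH: "1 \<le> d \<Longrightarrow> d \<le> 7 \<Longrightarrow> A [^]\<^bsub>G6\<^esub> (d::nat) \<notin> Hgrp"
proof
  assume "1 \<le> d" "d \<le> 7" "A [^]\<^bsub>G6\<^esub> d \<in> Hgrp"
  hence "cong2 (A [^]\<^bsub>G6\<^esub> d)" "d = 1 \<or> d = 2 \<or> d = 3 \<or> d = 4 \<or> d = 5 \<or> d = 6 \<or> d = 7"
    using H_cong2 by auto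
  thus False using notc1 notc2 notc3 notc4 notc5 notc6 notc7 by auto
qed

context group
begin

lemma conj_pow: assumes H: "subgroup H G" and a: "a \<in> carrier G"
  and c: "\<And>h. h \<in> H \<Longrightarrow> a \<otimes> h \<otimes> inv a \<in> H"
  shows "h \<in> H \<Longrightarrow> a [^] (n::nat) \<otimes> h \<otimes> inv (a [^] n) \<in> H"
proof (induction n arbitrary: h)
  case 0 then show ?case using subgroup.mem_carrier[OF H] by simp
next
  case (Suc n)
  have hc: "h \<in> carrier G" using Suc.prems subgroup.mem_carrier[OF H] by auto
  have "a [^] Suc n \<otimes> h \<otimes> inv (a [^] Suc n) = a [^] n \<otimes> (a \<otimes> h \<otimes> inv a) \<otimes> inv (a [^] n)"
    using a hc by (simp add: inv_mult_group m_assoc)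
  also have "\<dots> \<in> H" using Suc.IH[OF c[OF Suc.prems]] .
  finally show ?case .
qed

lemma decomp8: assumes H: "subgroup H G" and a: "a \<in> carrier G"
  and c: "\<And>h. h \<in> H \<Longrightarrow> a \<otimes> h \<otimes> inv a \<in> H" and a8: "a [^] (8::nat) \<in> H"
  shows "x \<in> generate G (insert a H) \<Longrightarrow> \<exists>h\<in>H. \<exists>i<(8::nat). x = h \<otimes> a [^] i"
proof (induction rule: generate.induct)
  case one
  then show ?case using subgroup.one_closed[OF H] by (intro bexI[of _ \<one>] exI[of _ 0]) auto
next
  case (incl x)
  show ?case
  proof (cases "x = a")
    case True
    then show ?thesis using subgroup.one_closed[OF H] a by (intro bexI[of _ \<one>] exI[of _ 1]) auto
  next
    case False
    hence "x \<in> H" using incl by auto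
    then show ?thesis using subgroup.mem_carrier[OF H] by (intro bexI[of _ x] exI[of _ 0]) auto
  qed
next
  case (inv x)
  show ?case
  proof (cases "x = a")
    case True
    have "a [^] (8::nat) = a [^] (7::nat) \<otimes> a" using nat_pow_Suc[of a 7] by simp
    hence "inv (a [^] (8::nat)) \<otimes> a [^] (7::nat) = inv a"
      using a by (simp add: inv_mult_group m_assoc)
    moreover have "inv (a [^] (8::nat)) \<in> H" using a8 subgroup.m_inv_closed[OF H] by auto
    ultimately show ?thesis using True by (intro bexI[of _ "inv (a [^] (8::nat))"] exI[of _ 7]) auto
  next
    case False
    hence "x \<in> H" using inv by auto
    hence "inv x \<in> H" using subgroup.m_inv_closed[OF H] by auto
    then show ?thesis using subgroup.mem_carrier[OF H] by (intro bexI[of _ "inv x"] exI[of _ 0]) auto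
  qed
next
  case (eng x1 x2)
  obtain h1 i where h1: "h1 \<in> H" "i < (8::nat)" "x1 = h1 \<otimes> a [^] i" using eng.IH(1) by blast
  obtain h2 j where h2: "h2 \<in> H" "j < (8::nat)" "x2 = h2 \<otimes> a [^] j" using eng.IH(2) by blast
  have h1c: "h1 \<in> carrier G" and h2c: "h2 \<in> carrier G" using h1 h2 subgroup.mem_carrier[OF H] by auto
  define h2' where "h2' = a [^] i \<otimes> h2 \<otimes> inv (a [^] i)"
  have h2': "h2' \<in> H" unfolding h2'_def by (rule conj_pow[OF H a c h2(1)])
  have h2'c: "h2' \<in> carrier G" using h2' subgroup.mem_carrier[OF H] by auto
  have cancel: "inv (a [^] i) \<otimes> (a [^] i \<otimes> a [^] j) = a [^] j"
    using a by (simp add: m_assoc[symmetric])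
  have "x1 \<otimes> x2 = h1 \<otimes> h2' \<otimes> a [^] (i + j)"
    unfolding h1(3) h2(3) h2'_def using a h1c h2c
    by (simp add: m_assoc nat_pow_mult[symmetric] cancel)
  show ?case
  proof (cases "i + j < 8")
    case True
    then show ?thesis using \<open>x1 \<otimes> x2 = _\<close> h1 h2' subgroup.m_closed[OF H] by blast
  next
    case False
    have "a [^] (i + j) = a [^] (8::nat) \<otimes> a [^] (i + j - 8)"
      using False a by (simp add: nat_pow_mult)
    hence "x1 \<otimes> x2 = (h1 \<otimes> h2' \<otimes> a [^] (8::nat)) \<otimes> a [^] (i + j - 8)"
      using \<open>x1 \<otimes> x2 = _\<close> a h1c h2'c by (simp add: m_assoc)
    moreover have "h1 \<otimes> h2' \<otimes> a [^] (8::nat) \<in> H" using h1(1) h2' a8 subgroup.m_closed[OF H] by blast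
    moreover have "i + j - 8 < 8" using h1(2) h2(2) by simp
    ultimately show ?thesis by blast
  qed
qed

lemma coset_pow_eq: assumes H: "subgroup H G" and a: "a \<in> carrier G" and ij: "i \<le> j"
  and eq: "H #> a [^] (i::nat) = H #> a [^] j"
  shows "a [^] (j - i) \<in> H"
proof -
  have "a [^] j \<in> H #> a [^] i" using eq rcos_self[OF _ H] a by simp
  then obtain h where h: "h \<in> H" "a [^] j = h \<otimes> a [^] i" by (auto simp: r_coset_def)
  have "a [^] (j - i) \<otimes> a [^] i = a [^] j" using a ij by (simp add: nat_pow_mult)
  hence "a [^] (j - i) \<otimes> a [^] i = h \<otimes> a [^] i" using h by simp
  hence "a [^] (j - i) = h" using a h subgroup.mem_carrier[OF H] by simp
  thus ?thesis using h by simp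
qed

end


hide_const (open) Polynomial.order

theorem lemma8p5:
  shows "Hgrp \<lhd> GammaA \<and>
         order (GammaA Mod Hgrp) = 8 \<and>
         carrier (GammaA Mod Hgrp) = generate (GammaA Mod Hgrp) {Hgrp #>\<^bsub>GammaA\<^esub> A}"
proof -
  interpret G: group G6 by (rule group_G6)
  let ?Gm = "generate G6 (insert A Hgrp)"
  have AG6: "A \<in> carrier G6" using A_G6 by simp
  have ins: "insert A Hgrp \<subseteq> carrier G6" using A_G6 H_G6 by simp
  have sub: "subgroup ?Gm G6" by (rule G.generate_is_subgroup[OF ins])
  have HG: "Hgrp \<subseteq> ?Gm" by (auto intro: generate.incl)
  have AG: "A \<in> ?Gm" by (auto intro: generate.incl)
  have carr: "carrier GammaA = ?Gm" "mult GammaA = mult G6" "one GammaA = one G6"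
    by (simp_all add: GammaA_def)
  have grp: "group GammaA" unfolding GammaA_def by (rule subgroup.subgroup_is_group[OF sub group_G6])
  have Hsub: "subgroup Hgrp GammaA" unfolding GammaA_def by (rule G.subgroup_incl[OF H_sub sub HG])
  have cH: "\<And>h. h \<in> Hgrp \<Longrightarrow> A \<otimes>\<^bsub>G6\<^esub> h \<otimes>\<^bsub>G6\<^esub> inv\<^bsub>G6\<^esub> A \<in> Hgrp" using conj_H by simp
  have dec: "\<And>x. x \<in> ?Gm \<Longrightarrow> \<exists>h\<in>Hgrp. \<exists>i<(8::nat). x = h \<otimes>\<^bsub>G6\<^esub> A [^]\<^bsub>G6\<^esub> i"
    by (rule G.decomp8[OF H_sub AG6 cH A8_H])
  have Hc: "\<And>h. h \<in> Hgrp \<Longrightarrow> h \<in> carrier G6" using H_G6 by auto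
  have powc: "\<And>n::nat. A [^]\<^bsub>GammaA\<^esub> n = A [^]\<^bsub>G6\<^esub> n"
    unfolding GammaA_def by (rule G.nat_pow_consistent[symmetric])
  have norm: "Hgrp \<lhd> GammaA"
  proof (rule group.normal_invI[OF grp Hsub])
    fix x h assume x: "x \<in> carrier GammaA" and h: "h \<in> Hgrp"
    have xG: "x \<in> ?Gm" using x carr by simp
    have inv_eq: "inv\<^bsub>GammaA\<^esub> x = inv\<^bsub>G6\<^esub> x"
      using G.m_inv_consistent[OF sub xG] unfolding GammaA_def by simp
    obtain h1 i where h1: "h1 \<in> Hgrp" "x = h1 \<otimes>\<^bsub>G6\<^esub> A [^]\<^bsub>G6\<^esub> (i::nat)" using dec[OF xG] by blast
    have c1: "A [^]\<^bsub>G6\<^esub> i \<otimes>\<^bsub>G6\<^esub> h \<otimes>\<^bsub>G6\<^esub> inv\<^bsub>G6\<^esub> (A [^]\<^bsub>G6\<^esub> i) \<in> Hgrp"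
      by (rule G.conj_pow[OF H_sub AG6 cH h])
    have "x \<otimes>\<^bsub>G6\<^esub> h \<otimes>\<^bsub>G6\<^esub> inv\<^bsub>G6\<^esub> x
        = h1 \<otimes>\<^bsub>G6\<^esub> (A [^]\<^bsub>G6\<^esub> i \<otimes>\<^bsub>G6\<^esub> h \<otimes>\<^bsub>G6\<^esub> inv\<^bsub>G6\<^esub> (A [^]\<^bsub>G6\<^esub> i)) \<otimes>\<^bsub>G6\<^esub> inv\<^bsub>G6\<^esub> h1"
      unfolding h1(2) using Hc[OF h1(1)] Hc[OF h] AG6
      by (simp only: G.inv_mult_group G.nat_pow_closed G.m_assoc G.inv_closed G.m_closed)
    also have "\<dots> \<in> Hgrp" using h1(1) c1 subgroup.m_closed[OF H_sub] subgroup.m_inv_closed[OF H_sub] by blast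
    finally show "x \<otimes>\<^bsub>GammaA\<^esub> h \<otimes>\<^bsub>GammaA\<^esub> inv\<^bsub>GammaA\<^esub> x \<in> Hgrp"
      using inv_eq carr by simp
  qed
  interpret N: normal Hgrp GammaA by (rule norm)
  have AGA: "A \<in> carrier GammaA" using AG carr by simp
  have HGA: "Hgrp \<subseteq> carrier GammaA" using HG carr by simp
  have car: "carrier (GammaA Mod Hgrp) = (\<lambda>i. Hgrp #>\<^bsub>GammaA\<^esub> (A [^]\<^bsub>GammaA\<^esub> i)) ` {..<(8::nat)}"
  proof
    show "carrier (GammaA Mod Hgrp) \<subseteq> (\<lambda>i. Hgrp #>\<^bsub>GammaA\<^esub> (A [^]\<^bsub>GammaA\<^esub> i)) ` {..<(8::nat)}"
    proof
      fix C assume "C \<in> carrier (GammaA Mod Hgrp)"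
      then obtain x where x: "x \<in> carrier GammaA" "C = Hgrp #>\<^bsub>GammaA\<^esub> x"
        unfolding carrier_FactGroup by blast
      have xG: "x \<in> ?Gm" using x carr by simp
      obtain h1 i where h1: "h1 \<in> Hgrp" "i < 8" "x = h1 \<otimes>\<^bsub>G6\<^esub> A [^]\<^bsub>G6\<^esub> (i::nat)"
        using dec[OF xG] by blast
      have h1c: "h1 \<in> carrier GammaA" using h1 HGA by auto
      have "C = Hgrp #>\<^bsub>GammaA\<^esub> (h1 \<otimes>\<^bsub>GammaA\<^esub> A [^]\<^bsub>GammaA\<^esub> i)"
        using x h1 carr powc by simp
      also have "\<dots> = (Hgrp #>\<^bsub>GammaA\<^esub> h1) #>\<^bsub>GammaA\<^esub> A [^]\<^bsub>GammaA\<^esub> i"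
        using N.coset_mult_assoc[OF HGA h1c N.nat_pow_closed[OF AGA]] by simp
      also have "\<dots> = Hgrp #>\<^bsub>GammaA\<^esub> A [^]\<^bsub>GammaA\<^esub> i"
        using N.rcos_const[OF grp h1(1)] by simp
      finally show "C \<in> (\<lambda>i. Hgrp #>\<^bsub>GammaA\<^esub> (A [^]\<^bsub>GammaA\<^esub> i)) ` {..<(8::nat)}" using h1(2) by auto
    qed
  next
    show "(\<lambda>i. Hgrp #>\<^bsub>GammaA\<^esub> (A [^]\<^bsub>GammaA\<^esub> i)) ` {..<(8::nat)} \<subseteq> carrier (GammaA Mod Hgrp)"
      using AGA unfolding carrier_FactGroup by auto
  qed
  have inj: "inj_on (\<lambda>i. Hgrp #>\<^bsub>GammaA\<^esub> (A [^]\<^bsub>GammaA\<^esub> i)) {..<(8::nat)}"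
  proof (rule inj_onI)
    fix i j :: nat assume ij: "i \<in> {..<8}" "j \<in> {..<8}"
      and eq: "Hgrp #>\<^bsub>GammaA\<^esub> (A [^]\<^bsub>GammaA\<^esub> i) = Hgrp #>\<^bsub>GammaA\<^esub> (A [^]\<^bsub>GammaA\<^esub> j)"
    show "i = j"
    proof (rule ccontr)
      assume ne: "i \<noteq> j"
      show False
      proof (cases "i < j")
        case True
        have "A [^]\<^bsub>GammaA\<^esub> (j - i) \<in> Hgrp" by (rule N.coset_pow_eq[OF Hsub AGA _ eq]) (use True in simp)
        moreover have "1 \<le> j - i" "j - i \<le> 7" using True ij by auto
        ultimately show False using Apow_notH[of "j - i"] powc by simp
      next
        case False
        hence "j < i" using ne by simp
        have "A [^]\<^bsub>GammaA\<^esub> (i - j) \<in> Hgrp" by (rule N.coset_pow_eq[OF Hsub AGA _ eq[symmetric]]) (use \<open>j < i\<close> in simp)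
        moreover have "1 \<le> i - j" "i - j \<le> 7" using \<open>j < i\<close> ij by auto
        ultimately show False using Apow_notH[of "i - j"] powc by simp
      qed
    qed
  qed
  have ord: "order (GammaA Mod Hgrp) = 8"
    unfolding Coset.order_def car using card_image[OF inj] by simp
  interpret Q: group "GammaA Mod Hgrp" by (rule N.factorgroup_is_group)
  have gen: "carrier (GammaA Mod Hgrp) = generate (GammaA Mod Hgrp) {Hgrp #>\<^bsub>GammaA\<^esub> A}"
  proof
    have pw: "Hgrp #>\<^bsub>GammaA\<^esub> (A [^]\<^bsub>GammaA\<^esub> i) \<in> generate (GammaA Mod Hgrp) {Hgrp #>\<^bsub>GammaA\<^esub> A}" for i :: nat
    proof (induction i)
      case 0
      have "Hgrp #>\<^bsub>GammaA\<^esub> (A [^]\<^bsub>GammaA\<^esub> (0::nat)) = \<one>\<^bsub>GammaA Mod Hgrp\<^esub>"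
        using N.coset_mult_one[OF HGA] by (simp add: FactGroup_def)
      then show ?case using generate.one by metis
    next
      case (Suc i)
      have "Hgrp #>\<^bsub>GammaA\<^esub> (A [^]\<^bsub>GammaA\<^esub> Suc i)
          = (Hgrp #>\<^bsub>GammaA\<^esub> (A [^]\<^bsub>GammaA\<^esub> i)) \<otimes>\<^bsub>GammaA Mod Hgrp\<^esub> (Hgrp #>\<^bsub>GammaA\<^esub> A)"
        using N.rcos_sum[OF N.nat_pow_closed[OF AGA] AGA] by (simp add: FactGroup_def)
      then show ?case using generate.eng[OF Suc.IH generate.incl[of "Hgrp #>\<^bsub>GammaA\<^esub> A"]] by simp
    qed
    show "carrier (GammaA Mod Hgrp) \<subseteq> generate (GammaA Mod Hgrp) {Hgrp #>\<^bsub>GammaA\<^esub> A}"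
      unfolding car using pw by auto
    have "{Hgrp #>\<^bsub>GammaA\<^esub> A} \<subseteq> carrier (GammaA Mod Hgrp)"
      using AGA unfolding carrier_FactGroup by auto
    thus "generate (GammaA Mod Hgrp) {Hgrp #>\<^bsub>GammaA\<^esub> A} \<subseteq> carrier (GammaA Mod Hgrp)"
      by (rule Q.generate_incl)
  qed
  show ?thesis using norm ord gen by blast
qed

end
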